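(* Let $m$ be an odd positive integer, $D=D_{2m}$, $\sigma=\sigma_{2m}$, $\tau=\tau_{2m}$. Let $I_m\subset\mathbb{Z}[D/\langle\sigma^m\rangle]\oplus\mathbb{Z}[D/\langle\tau\rangle]$ be the kernel of the sum of the two augmentation maps, let $R_m:=\mathbb{Z}[D]\oplus\mathbb{Z}[D/\langle\sigma^m\rangle]\oplus\mathbb{Z}$ ($\mathbb{Z}$ with trivial action), and let $\Psi_m\colon R_m\to I_m$ be the $D$-homomorphism $\Psi_m(x_1,x_2,x_3)=\psi_1(x_1)+\psi_2(x_2)+\psi_3(x_3)$, where $\psi_1,\psi_2,\psi_3$ are the $D$-homomorphisms determined by $\psi_1(1)=(1,-1)$, $\psi_2(1)=(1+\sigma^2,\,-(1+\sigma^m))$, $\psi_3(1)=\big((\textstyle\sum_{i=0}^{m-1}\sigma^i)(1+\tau),\,-\sum_{i=0}^{2m-1}\sigma^i\big)$. Then $\Psi_m$ is surjective, and with $E_m:=\ker\Psi_m$ the exact sequence $0\to E_m\to R_m\xrightarrow{\Psi_m}I_m\to0$ is a coflabby resolution of $I_m$; that is, $H^1(H,E_m)=0$ for every subgroup $H$ of $D$.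
   Context: $D_{n}:=\langle\sigma_n,\tau_n\mid\sigma_n^n=\tau_n^2=1,\ \tau_n\sigma_n\tau_n^{-1}=\sigma_n^{-1}\rangle$ is the dihedral group of order $2n$. In $\mathbb{Z}[D/H]$, an element $g\in D$ (or a $\mathbb{Z}$-combination of such) denotes its image under $g\mapsto gH$; so $1$ denotes the trivial coset. The augmentation $\mathbb{Z}[D/H]\to\mathbb{Z}$ sends each coset to $1$. A coflabby resolution of a $G$-lattice $M$ is an exact sequence $0\to F\to R\to M\to0$ of $G$-lattices with $R$ permutation (has a $\mathbb{Z}$-basis permuted by $G$) and $H^1(H,F)=0$ for all subgroups $H\leq G$. *)

theory Defs
  imports "HOL-Algebra.Coset" "HOL-Library.Function_Algebras" "HOL-Library.Product_Plus"
begin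

text \<open>Dihedral group of order 2n: the pair (k, e) stands for sigma^k tau^e, 0 <= k < n.\<close>

definition dmul :: "int \<Rightarrow> int \<times> bool \<Rightarrow> int \<times> bool \<Rightarrow> int \<times> bool" where
  "dmul n x y = ((fst x + (if snd x then - fst y else fst y)) mod n, snd x \<noteq> snd y)"

definition dihedral :: "int \<Rightarrow> (int \<times> bool) monoid" where
  "dihedral n = \<lparr>carrier = {0..<n} \<times> UNIV, mult = dmul n, one = (0, False)\<rparr>"

definition dsigma :: "int \<times> bool" where "dsigma = (1, False)"
definition dtau :: "int \<times> bool" where "dtau = (0, True)"

definition lcos :: "('a, 'b) monoid_scheme \<Rightarrow> 'a set \<Rightarrow> 'a set set" where
  "lcos G H = {g <#\<^bsub>G\<^esub> H | g. g \<in> carrier G}"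

text \<open>The permutation lattice Z[G/H], as integer-valued functions on G/H
  (zero outside G/H); the coset gH corresponds to its indicator.\<close>
definition pm :: "('a, 'b) monoid_scheme \<Rightarrow> 'a set \<Rightarrow> ('a set \<Rightarrow> int) set" where
  "pm G H = {x. \<forall>C. C \<notin> lcos G H \<longrightarrow> x C = 0}"

definition pact :: "('a, 'b) monoid_scheme \<Rightarrow> 'a set \<Rightarrow> 'a \<Rightarrow> ('a set \<Rightarrow> int) \<Rightarrow> ('a set \<Rightarrow> int)" where
  "pact G H g x = (\<lambda>C. if C \<in> lcos G H then x (inv\<^bsub>G\<^esub> g <#\<^bsub>G\<^esub> C) else 0)"

definition cs :: "('a, 'b) monoid_scheme \<Rightarrow> 'a set \<Rightarrow> 'a \<Rightarrow> ('a set \<Rightarrow> int)" where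
  "cs G H g = (\<lambda>C. if C = g <#\<^bsub>G\<^esub> H then 1 else 0)"

definition aug :: "('a, 'b) monoid_scheme \<Rightarrow> 'a set \<Rightarrow> ('a set \<Rightarrow> int) \<Rightarrow> int" where
  "aug G H x = (\<Sum>C\<in>lcos G H. x C)"

definition zsc :: "int \<Rightarrow> ('a \<Rightarrow> int) \<Rightarrow> ('a \<Rightarrow> int)" where
  "zsc k y = (\<lambda>C. k * y C)"

definition zsc2 :: "int \<Rightarrow> ('a \<Rightarrow> int) \<times> ('b \<Rightarrow> int) \<Rightarrow> ('a \<Rightarrow> int) \<times> ('b \<Rightarrow> int)" where
  "zsc2 k y = (zsc k (fst y), zsc k (snd y))"

definition crep :: "'a set \<Rightarrow> 'a" where "crep C = (SOME g. g \<in> C)"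

text \<open>The G-homomorphism Z[G/H] -> M determined by 1 |-> v (for v fixed by H),
  given the action act on a target M = Z[G/A] + Z[G/B] (pairs of functions):
  x |-> sum over cosets C = gH of x(C) * g v.\<close>
definition plift :: "('a, 'b) monoid_scheme \<Rightarrow> 'a set
    \<Rightarrow> ('a \<Rightarrow> ('c \<Rightarrow> int) \<times> ('d \<Rightarrow> int) \<Rightarrow> ('c \<Rightarrow> int) \<times> ('d \<Rightarrow> int))
    \<Rightarrow> ('c \<Rightarrow> int) \<times> ('d \<Rightarrow> int) \<Rightarrow> ('a set \<Rightarrow> int) \<Rightarrow> ('c \<Rightarrow> int) \<times> ('d \<Rightarrow> int)" where
  "plift G H act v x = (\<Sum>C\<in>lcos G H. zsc2 (x C) (act (crep C) v))"

definition H1_zero :: "('a, 'b) monoid_scheme \<Rightarrow> 'a set \<Rightarrow> ('a \<Rightarrow> 'm \<Rightarrow> 'm) \<Rightarrow> ('m::ab_group_add) set \<Rightarrow> bool" where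
  "H1_zero G H act E =
    (\<forall>f. (\<forall>h\<in>H. f h \<in> E) \<longrightarrow> (\<forall>g\<in>H. \<forall>h\<in>H. f (g \<otimes>\<^bsub>G\<^esub> h) = f g + act g (f h))
       \<longrightarrow> (\<exists>e\<in>E. \<forall>g\<in>H. f g = act g e - e))"

end

theory Submission
  imports Defs
begin

lemma fun_sum_apply: "(\<Sum>x\<in>A. (f x :: 'a \<Rightarrow> 'b::comm_monoid_add)) C = (\<Sum>x\<in>A. f x C)"
  by (induction A rule: infinite_finite_induct) auto

lemma fun_minus_apply: "((f::'a \<Rightarrow> 'b::group_add) - g) x = f x - g x"
  by simp

lemma fun_uminus_apply: "(- (f::'a \<Rightarrow> 'b::group_add)) x = - f x"
  by simp

lemma zsc_apply[simp]: "zsc k y C = k * y C" by (simp add: zsc_def)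

lemma zsc_add: "zsc k (x + y) = zsc k x + zsc k y"
  by (auto simp: zsc_def fun_eq_iff algebra_simps)
lemma zsc_add2: "zsc (a + b) x = zsc a x + zsc b x"
  by (auto simp: zsc_def fun_eq_iff algebra_simps)
lemma zsc_zero[simp]: "zsc 0 x = 0" by (auto simp: zsc_def fun_eq_iff)
lemma zsc_one[simp]: "zsc 1 x = x" by (auto simp: zsc_def fun_eq_iff)
lemma zsc_zero2[simp]: "zsc a 0 = 0" by (auto simp: zsc_def fun_eq_iff)
lemma zsc_minus: "zsc a (- x) = - zsc a x" by (auto simp: zsc_def fun_eq_iff)
lemma zsc_minus2: "zsc (- a) x = - zsc a x" by (auto simp: zsc_def fun_eq_iff)
lemma zsc_diff: "zsc a (x - y) = zsc a x - zsc a y" by (auto simp: zsc_def fun_eq_iff algebra_simps)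
lemma zsc_zsc: "zsc a (zsc b x) = zsc (a * b) x" by (auto simp: zsc_def fun_eq_iff)
lemma zsc_sum: "zsc a (\<Sum>i\<in>A. f i) = (\<Sum>i\<in>A. zsc a (f i))"
  by (auto simp: zsc_def fun_eq_iff fun_sum_apply sum_distrib_left)
lemma zsc_sum2: "zsc (\<Sum>i\<in>A. f i) x = (\<Sum>i\<in>A. zsc (f i) x)"
  by (auto simp: zsc_def fun_eq_iff fun_sum_apply sum_distrib_right)

lemma zsc2_add: "zsc2 k (x + y) = zsc2 k x + zsc2 k y"
  by (simp add: zsc2_def zsc_add)
lemma zsc2_add2: "zsc2 (a + b) x = zsc2 a x + zsc2 b x"
  by (simp add: zsc2_def zsc_add2)
lemma zsc2_one[simp]: "zsc2 1 x = x" by (simp add: zsc2_def)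
lemma zsc2_zero[simp]: "zsc2 0 x = 0" by (simp add: zsc2_def zero_prod_def)
lemma zsc2_zero2[simp]: "zsc2 a 0 = 0" by (simp add: zsc2_def zero_prod_def)
lemma zsc2_zsc2: "zsc2 a (zsc2 b x) = zsc2 (a * b) x" by (simp add: zsc2_def zsc_zsc)
lemma zsc2_sum: "zsc2 a (\<Sum>i\<in>A. f i) = (\<Sum>i\<in>A. zsc2 a (f i))"
  by (simp add: zsc2_def zsc_sum fst_sum snd_sum sum_prod)
lemma zsc2_sum2: "zsc2 (\<Sum>i\<in>A. f i) x = (\<Sum>i\<in>A. zsc2 (f i) x)"
  by (simp add: zsc2_def zsc_sum2 sum_prod)
lemma zsc2_minus: "zsc2 a (- x) = - zsc2 a x" by (simp add: zsc2_def zsc_minus)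
lemma zsc2_minus2: "zsc2 (- a) x = - zsc2 a x" by (simp add: zsc2_def zsc_minus2)
lemma zsc2_Pair: "zsc2 a (x, y) = (zsc a x, zsc a y)" by (simp add: zsc2_def)

definition zsc3 :: "int \<Rightarrow> ('a \<Rightarrow> int) \<times> ('b \<Rightarrow> int) \<times> int \<Rightarrow> ('a \<Rightarrow> int) \<times> ('b \<Rightarrow> int) \<times> int" where
  "zsc3 k y = (zsc k (fst y), zsc k (fst (snd y)), k * snd (snd y))"

lemma zsc3_add: "zsc3 k (x + y) = zsc3 k x + zsc3 k y"
  by (simp add: zsc3_def zsc_add algebra_simps)
lemma zsc3_add2: "zsc3 (a + b) x = zsc3 a x + zsc3 b x"
  by (simp add: zsc3_def zsc_add2 algebra_simps)
lemma zsc3_one[simp]: "zsc3 1 x = x" by (simp add: zsc3_def)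
lemma zsc3_zero[simp]: "zsc3 0 x = 0" by (simp add: zsc3_def zero_prod_def)
lemma zsc3_zsc3: "zsc3 a (zsc3 b x) = zsc3 (a * b) x" by (simp add: zsc3_def zsc_zsc)
lemma zsc3_sum: "zsc3 a (\<Sum>i\<in>A. f i) = (\<Sum>i\<in>A. zsc3 a (f i))"
  by (simp add: zsc3_def zsc_sum fst_sum snd_sum sum_prod sum_distrib_left)
lemma zsc3_sum2: "zsc3 (\<Sum>i\<in>A. f i) x = (\<Sum>i\<in>A. zsc3 (f i) x)"
  by (simp add: zsc3_def zsc_sum2 sum_prod sum_distrib_right)
lemma zsc3_minus: "zsc3 a (- x) = - zsc3 a x" by (simp add: zsc3_def zsc_minus)
lemma zsc3_minus2: "zsc3 (- a) x = - zsc3 a x" by (simp add: zsc3_def zsc_minus2)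
lemma zsc3_Pair: "zsc3 a (x, y, z) = (zsc a x, zsc a y, a * z)" by (simp add: zsc3_def)

definition glift :: "(int \<Rightarrow> 'm \<Rightarrow> 'm) \<Rightarrow> ('a, 'b) monoid_scheme \<Rightarrow> 'a set
    \<Rightarrow> ('a \<Rightarrow> 'm \<Rightarrow> 'm) \<Rightarrow> 'm \<Rightarrow> ('a set \<Rightarrow> int) \<Rightarrow> 'm::comm_monoid_add" where
  "glift sm G K act v x = (\<Sum>C\<in>lcos G K. sm (x C) (act (crep C) v))"

lemma plift_glift: "plift G K act v x = glift zsc2 G K act v x"
  by (simp add: plift_def glift_def)

context group
begin

lemma lcosI: "g \<in> carrier G \<Longrightarrow> g <# K \<in> lcos G K"
  by (auto simp: lcos_def)

lemma lcosE: "C \<in> lcos G K \<Longrightarrow> (\<And>g. g \<in> carrier G \<Longrightarrow> C = g <# K \<Longrightarrow> P) \<Longrightarrow> P"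
  by (auto simp: lcos_def)

lemma finite_lcos: "finite (carrier G) \<Longrightarrow> finite (lcos G K)"
proof -
  assume "finite (carrier G)"
  moreover have "lcos G K = (\<lambda>g. g <# K) ` carrier G" by (auto simp: lcos_def)
  ultimately show ?thesis by simp
qed

lemma lcos_self_mem: "subgroup K G \<Longrightarrow> g \<in> carrier G \<Longrightarrow> g \<in> g <# K"
  unfolding l_coset_def using subgroup.one_closed[of K G] by force

lemma crep_mem: assumes "subgroup K G" "C \<in> lcos G K" shows "crep C \<in> C"
proof -
  obtain g where g: "g \<in> carrier G" "C = g <# K" using assms(2) by (rule lcosE)
  then have "g \<in> C" using lcos_self_mem assms(1) by auto
  then show ?thesis unfolding crep_def by (rule someI)
qed

lemma lcos_sub: "subgroup K G \<Longrightarrow> C \<in> lcos G K \<Longrightarrow> C \<subseteq> carrier G"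
  using l_coset_carrier by (auto elim!: lcosE)

lemma crep_carrier: "subgroup K G \<Longrightarrow> C \<in> lcos G K \<Longrightarrow> crep C \<in> carrier G"
  using crep_mem lcos_sub by blast

lemma lcos_eq_mem: assumes "subgroup K G" "C \<in> lcos G K" "h \<in> C" shows "h <# K = C"
proof -
  obtain g where g: "g \<in> carrier G" "C = g <# K" using assms(2) by (rule lcosE)
  show ?thesis using l_repr_independence[of h g K] assms g by simp
qed

lemma crep_coset: "subgroup K G \<Longrightarrow> C \<in> lcos G K \<Longrightarrow> crep C <# K = C"
  using crep_mem lcos_eq_mem by blast

lemma lcos_mem_iff: assumes "subgroup K G" "C \<in> lcos G K" "h \<in> carrier G"
  shows "h <# K = C \<longleftrightarrow> h \<in> C"
  using lcos_eq_mem[OF assms(1,2)] lcos_self_mem[OF assms(1,3)] by blast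

lemma lcos_mult: assumes "subgroup K G" "g \<in> carrier G" "C \<in> lcos G K"
  shows "g <# C \<in> lcos G K"
proof -
  obtain h where h: "h \<in> carrier G" "C = h <# K" using assms(3) by (rule lcosE)
  have "g <# C = (g \<otimes> h) <# K" using h assms lcos_m_assoc subgroup.subset by blast
  then show ?thesis using h assms by (simp add: lcosI)
qed

lemma lcos_assoc: assumes "subgroup K G" "g \<in> carrier G" "h \<in> carrier G" "C \<in> lcos G K"
  shows "g <# (h <# C) = (g \<otimes> h) <# C"
  using lcos_m_assoc[of C g h] lcos_sub[OF assms(1,4)] assms by simp

lemma lcos_one: "subgroup K G \<Longrightarrow> C \<in> lcos G K \<Longrightarrow> \<one> <# C = C"
  using lcos_mult_one lcos_sub by blast

lemma lcos_cancel: assumes "subgroup K G" "g \<in> carrier G" "C \<in> lcos G K"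
  shows "inv g <# (g <# C) = C" "g <# (inv g <# C) = C"
  using lcos_assoc[OF assms(1) _ _ assms(3)] assms lcos_one by auto

lemma lcos_bij: assumes "subgroup K G" "g \<in> carrier G"
  shows "bij_betw (\<lambda>C. g <# C) (lcos G K) (lcos G K)"
proof (rule bij_betw_byWitness[where f' = "\<lambda>C. inv g <# C"])
  show "\<forall>a\<in>lcos G K. inv g <# (g <# a) = a" using lcos_cancel assms by auto
  show "\<forall>a'\<in>lcos G K. g <# (inv g <# a') = a'" using lcos_cancel assms by auto
  show "(\<lambda>C. g <# C) ` lcos G K \<subseteq> lcos G K" using lcos_mult assms by auto
  show "(\<lambda>C. inv g <# C) ` lcos G K \<subseteq> lcos G K" using lcos_mult assms by auto
qed

lemma lcos_lmult: assumes "subgroup K G" "g \<in> carrier G" "h \<in> carrier G"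
  shows "g <# (h <# K) = (g \<otimes> h) <# K"
  using lcos_m_assoc subgroup.subset assms by blast

lemma lcos_inj: assumes "subgroup K G" "g \<in> carrier G" "C \<in> lcos G K" "C' \<in> lcos G K"
  "g <# C = g <# C'" shows "C = C'"
  using lcos_cancel[OF assms(1,2,3)] lcos_cancel[OF assms(1,2,4)] assms(5) by metis

lemma pm_zero[simp]: "0 \<in> pm G K" by (simp add: pm_def)
lemma pm_add: "x \<in> pm G K \<Longrightarrow> y \<in> pm G K \<Longrightarrow> x + y \<in> pm G K" by (simp add: pm_def)
lemma pm_diff: "x \<in> pm G K \<Longrightarrow> y \<in> pm G K \<Longrightarrow> x - y \<in> pm G K" by (simp add: pm_def)
lemma pm_uminus: "x \<in> pm G K \<Longrightarrow> - x \<in> pm G K" by (simp add: pm_def)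
lemma pm_zsc: "x \<in> pm G K \<Longrightarrow> zsc a x \<in> pm G K" by (simp add: pm_def)
lemma pm_sum: "(\<And>i. i \<in> A \<Longrightarrow> f i \<in> pm G K) \<Longrightarrow> (\<Sum>i\<in>A. f i) \<in> pm G K"
  by (induction A rule: infinite_finite_induct) (auto intro: pm_add)
lemma pm_cs: "g \<in> carrier G \<Longrightarrow> cs G K g \<in> pm G K"
  by (auto simp: pm_def cs_def lcosI)
lemma pm_pact: "pact G K g x \<in> pm G K" by (simp add: pm_def pact_def)

lemma pact_add: "pact G K g (x + y) = pact G K g x + pact G K g y"
  by (auto simp: pact_def fun_eq_iff)
lemma pact_diff: "pact G K g (x - y) = pact G K g x - pact G K g y"
  by (auto simp: pact_def fun_eq_iff)
lemma pact_uminus: "pact G K g (- x) = - pact G K g x"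
  by (auto simp: pact_def fun_eq_iff)
lemma pact_zero[simp]: "pact G K g 0 = 0"
  by (auto simp: pact_def fun_eq_iff)
lemma pact_zsc: "pact G K g (zsc a x) = zsc a (pact G K g x)"
  by (auto simp: pact_def fun_eq_iff)
lemma pact_sum: "pact G K g (\<Sum>i\<in>A. f i) = (\<Sum>i\<in>A. pact G K g (f i))"
proof (induction A rule: infinite_finite_induct)
  case (infinite A) then show ?case by (simp only: sum.infinite[OF infinite] pact_zero)
next
  case empty then show ?case by (simp only: sum.empty pact_zero)
next
  case (insert x F) then show ?case by (simp only: sum.insert[OF insert(1,2)] pact_add)
qed

lemma pact_mult: assumes "subgroup K G" "g \<in> carrier G" "h \<in> carrier G"
  shows "pact G K g (pact G K h x) = pact G K (g \<otimes> h) x"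
proof
  fix C
  show "pact G K g (pact G K h x) C = pact G K (g \<otimes> h) x C"
  proof (cases "C \<in> lcos G K")
    case True
    have "inv g <# C \<in> lcos G K" using lcos_mult assms True by auto
    moreover have "inv h <# (inv g <# C) = inv (g \<otimes> h) <# C"
      using lcos_assoc assms True by (simp add: inv_mult_group)
    ultimately show ?thesis using True by (simp add: pact_def)
  qed (simp add: pact_def)
qed

lemma pact_one: assumes "subgroup K G" "x \<in> pm G K" shows "pact G K \<one> x = x"
proof
  fix C show "pact G K \<one> x C = x C"
    using assms lcos_one by (cases "C \<in> lcos G K") (auto simp: pact_def pm_def)
qed

lemma pact_cs: assumes "subgroup K G" "g \<in> carrier G" "h \<in> carrier G"
  shows "pact G K g (cs G K h) = cs G K (g \<otimes> h)"
proof
  fix C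
  show "pact G K g (cs G K h) C = cs G K (g \<otimes> h) C"
  proof (cases "C \<in> lcos G K")
    case True
    have "inv g <# C = h <# K \<longleftrightarrow> C = (g \<otimes> h) <# K"
    proof
      assume "inv g <# C = h <# K"
      then have "g <# (inv g <# C) = g <# (h <# K)" by simp
      then show "C = (g \<otimes> h) <# K" using lcos_cancel lcos_lmult assms True by auto
    next
      assume "C = (g \<otimes> h) <# K"
      then show "inv g <# C = h <# K" using lcos_lmult assms
        by (simp add: m_assoc[symmetric])
    qed
    then show ?thesis using True by (simp add: pact_def cs_def)
  next
    case False
    then have "C \<noteq> (g \<otimes> h) <# K" using lcosI assms by auto
    then show ?thesis using False by (simp add: pact_def cs_def)
  qed
qed

lemma aug_add: "aug G K (x + y) = aug G K x + aug G K y"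
  by (simp add: aug_def sum.distrib)
lemma aug_diff: "aug G K (x - y) = aug G K x - aug G K y"
  by (simp add: aug_def sum_subtractf)
lemma aug_uminus: "aug G K (- x) = - aug G K x"
  by (simp add: aug_def sum_negf)
lemma aug_zero[simp]: "aug G K 0 = 0"
  by (simp add: aug_def)
lemma aug_zsc: "aug G K (zsc a x) = a * aug G K x"
  by (simp add: aug_def sum_distrib_left)
lemma aug_sum: "aug G K (\<Sum>i\<in>A. f i) = (\<Sum>i\<in>A. aug G K (f i))"
proof (induction A rule: infinite_finite_induct)
  case (infinite A) then show ?case by (simp only: sum.infinite[OF infinite] aug_zero)
next
  case empty then show ?case by (simp only: sum.empty aug_zero)
next
  case (insert x F) then show ?case by (simp only: sum.insert[OF insert(1,2)] aug_add)
qed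

lemma aug_cs: assumes "finite (carrier G)" "g \<in> carrier G" shows "aug G K (cs G K g) = 1"
proof -
  have "aug G K (cs G K g) = (\<Sum>C\<in>lcos G K. if C = g <# K then 1 else 0)"
    by (simp add: aug_def cs_def)
  also have "\<dots> = 1" using finite_lcos[OF assms(1)] lcosI[OF assms(2)]
    by (simp add: sum.delta)
  finally show ?thesis .
qed

lemma aug_pact: assumes "subgroup K G" "finite (carrier G)" "g \<in> carrier G"
  shows "aug G K (pact G K g x) = aug G K x"
proof -
  have "aug G K (pact G K g x) = (\<Sum>C\<in>lcos G K. x (inv g <# C))"
    by (simp add: aug_def pact_def)
  also have "\<dots> = (\<Sum>C\<in>lcos G K. x C)"
    using sum.reindex_bij_betw[OF lcos_bij[OF assms(1), of "inv g"]] assms by simp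
  finally show ?thesis by (simp add: aug_def)
qed

lemma pm_decomp: assumes "subgroup K G" "finite (carrier G)" "x \<in> pm G K"
  shows "x = (\<Sum>C\<in>lcos G K. zsc (x C) (cs G K (crep C)))"
proof
  fix C0
  have "(\<Sum>C\<in>lcos G K. zsc (x C) (cs G K (crep C))) C0
      = (\<Sum>C\<in>lcos G K. if C = C0 then x C else 0)"
    by (auto simp: fun_sum_apply cs_def crep_coset[OF assms(1)] intro!: sum.cong)
  also have "\<dots> = x C0" using finite_lcos[OF assms(2)] assms(3)
    by (auto simp: sum.delta' pm_def)
  finally show "x C0 = (\<Sum>C\<in>lcos G K. zsc (x C) (cs G K (crep C))) C0" by simp
qed

lemma card_lcos_elem: assumes "subgroup K G" "finite (carrier G)" "g \<in> carrier G"
  shows "card (g <# K) = card K"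
proof -
  have "g <# K = (\<lambda>k. g \<otimes> k) ` K" by (auto simp: l_coset_def)
  moreover have "inj_on (\<lambda>k. g \<otimes> k) K" using assms subgroup.subset[OF assms(1)]
    unfolding inj_on_def by (metis Units_eq Units_l_cancel subsetD)
  ultimately show ?thesis by (simp add: card_image)
qed

lemma sum_carrier_lcos: assumes "subgroup K G" "finite (carrier G)"
  shows "(\<Sum>g\<in>carrier G. F g) = (\<Sum>C\<in>lcos G K. \<Sum>g\<in>C. F g)"
proof -
  have "(\<Sum>C\<in>lcos G K. \<Sum>g\<in>C. F g) = (\<Sum>C\<in>lcos G K. \<Sum>g\<in>{g\<in>carrier G. g <# K = C}. F g)"
  proof (rule sum.cong)
    fix C assume C: "C \<in> lcos G K"
    have "{g\<in>carrier G. g <# K = C} = C" using lcos_mem_iff[OF assms(1) C] lcos_sub[OF assms(1) C]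
      by auto
    then show "(\<Sum>g\<in>C. F g) = (\<Sum>g\<in>{g\<in>carrier G. g <# K = C}. F g)" by simp
  qed simp
  also have "\<dots> = (\<Sum>g\<in>carrier G. F g)"
    by (rule sum.group) (auto simp: assms(2) finite_lcos lcosI)
  finally show ?thesis by simp
qed

lemma sum_carrier_lcos2: assumes "subgroup K G" "finite (carrier G)"
  shows "(\<Sum>g\<in>carrier G. F (g <# K)) = of_nat (card K) * (\<Sum>C\<in>lcos G K. F C)"
proof -
  have "(\<Sum>g\<in>carrier G. F (g <# K)) = (\<Sum>C\<in>lcos G K. \<Sum>g\<in>C. F (g <# K))"
    by (rule sum_carrier_lcos[OF assms])
  also have "\<dots> = (\<Sum>C\<in>lcos G K. of_nat (card K) * F C)"
  proof (rule sum.cong)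
    fix C assume C: "C \<in> lcos G K"
    have "(\<Sum>g\<in>C. F (g <# K)) = (\<Sum>g\<in>C. F C)"
      using lcos_eq_mem[OF assms(1) C] by simp
    also have "\<dots> = of_nat (card C) * F C" by simp
    also have "card C = card K" using C card_lcos_elem assms by (auto elim!: lcosE)
    finally show "(\<Sum>g\<in>C. F (g <# K)) = of_nat (card K) * F C" by simp
  qed simp
  finally show ?thesis by (simp add: sum_distrib_left)
qed

end


definition modact :: "('a, 'b) monoid_scheme \<Rightarrow> (int \<Rightarrow> 'm \<Rightarrow> 'm) \<Rightarrow> ('a \<Rightarrow> 'm \<Rightarrow> 'm::ab_group_add) \<Rightarrow> bool" where
  "modact G sm act \<longleftrightarrow>
    (\<forall>g\<in>carrier G. \<forall>v w. act g (v + w) = act g v + act g w) \<and>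
    (\<forall>g\<in>carrier G. \<forall>a v. act g (sm a v) = sm a (act g v)) \<and>
    (\<forall>g\<in>carrier G. \<forall>h\<in>carrier G. \<forall>v. act (g \<otimes>\<^bsub>G\<^esub> h) v = act g (act h v)) \<and>
    (\<forall>a b v. sm (a + b) v = sm a v + sm b v) \<and>
    (\<forall>a v w. sm a (v + w) = sm a v + sm a w) \<and>
    (\<forall>v. sm 1 v = v) \<and>
    (\<forall>a b v. sm a (sm b v) = sm (a * b) v)"

lemma int_div_lemma:
  fixes N x a b :: int
  assumes "N > 0" "N * x = a - b"
  shows "x = a div N - b div N"
proof -
  define d where "d = x - a div N + b div N"
  have ea: "a = N * (a div N) + a mod N" by simp
  have eb: "b = N * (b div N) + b mod N" by simp
  have "N * d = N * x - N * (a div N) + N * (b div N)"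
    unfolding d_def by (simp add: algebra_simps)
  also have "\<dots> = a mod N - b mod N"
    using assms(2) ea eb by linarith
  finally have "N * d = a mod N - b mod N" .
  moreover have "0 \<le> a mod N" "a mod N < N" "0 \<le> b mod N" "b mod N < N" using assms(1) by auto
  ultimately have h: "- N < N * d" "N * d < N" by linarith+
  have "d = 0"
  proof (rule ccontr)
    assume "d \<noteq> 0"
    then consider "d \<ge> 1" | "d \<le> -1" by linarith
    then show False
    proof cases
      case 1
      have "N * 1 \<le> N * d" using 1 assms(1) by (intro mult_left_mono) auto
      then show False using h by linarith
    next
      case 2
      have "N * d \<le> N * (-1)" using 2 assms(1) by (intro mult_left_mono) auto
      then show False using h by linarith
    qed
  qed
  then show ?thesis unfolding d_def by simp
qed

context group
begin

lemma modact_sm0: assumes "modact G sm act" shows "sm 0 v = 0"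
proof -
  have "sm (0 + 0) v = sm 0 v + sm 0 v" using assms unfolding modact_def by blast
  then show ?thesis by simp
qed

lemma modact_sm0': assumes "modact G sm act" shows "sm a 0 = 0"
proof -
  have "sm a (0 + 0) = sm a 0 + sm a 0" using assms unfolding modact_def by blast
  then show ?thesis by simp
qed

lemma modact_act0: assumes "modact G sm act" "g \<in> carrier G" shows "act g 0 = 0"
proof -
  have "act g (0 + 0) = act g 0 + act g 0" using assms unfolding modact_def by blast
  then show ?thesis by simp
qed

lemma modact_sm_sum: assumes "modact G sm act" shows "sm a (\<Sum>i\<in>A. f i) = (\<Sum>i\<in>A. sm a (f i))"
proof (induction A rule: infinite_finite_induct)
  case (infinite A) then show ?case using modact_sm0'[OF assms] by simp
next
  case empty then show ?case using modact_sm0'[OF assms] by simp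
next
  case (insert x F) then show ?case using assms by (simp add: modact_def)
qed

lemma modact_act_sum: assumes "modact G sm act" "g \<in> carrier G"
  shows "act g (\<Sum>i\<in>A. f i) = (\<Sum>i\<in>A. act g (f i))"
proof (induction A rule: infinite_finite_induct)
  case (infinite A) then show ?case using modact_act0[OF assms] by simp
next
  case empty then show ?case using modact_act0[OF assms] by simp
next
  case (insert x F) then show ?case using assms by (simp add: modact_def)
qed

lemma glift_add: assumes "modact G sm act"
  shows "glift sm G K act v (x + y) = glift sm G K act v x + glift sm G K act v y"
  using assms by (simp add: glift_def modact_def sum.distrib)

lemma glift_zero: assumes "modact G sm act"
  shows "glift sm G K act v 0 = 0"
  using modact_sm0[OF assms] by (simp add: glift_def)

lemma glift_uminus: assumes "modact G sm act"
  shows "glift sm G K act v (- x) = - glift sm G K act v x"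
proof -
  have "glift sm G K act v (x + - x) = glift sm G K act v x + glift sm G K act v (- x)"
    by (rule glift_add[OF assms])
  then show ?thesis using glift_zero[OF assms] by (simp add: eq_neg_iff_add_eq_0 add.commute)
qed

lemma glift_diff: assumes "modact G sm act"
  shows "glift sm G K act v (x - y) = glift sm G K act v x - glift sm G K act v y"
  using glift_add[OF assms, where x = x and y = "- y"] glift_uminus[OF assms, where x = y] by simp

lemma glift_zsc: assumes "modact G sm act"
  shows "glift sm G K act v (zsc a x) = sm a (glift sm G K act v x)"
  using assms by (simp add: glift_def modact_def modact_sm_sum[OF assms])

lemma glift_sum: assumes "modact G sm act"
  shows "glift sm G K act v (\<Sum>i\<in>A. f i) = (\<Sum>i\<in>A. glift sm G K act v (f i))"
proof (induction A rule: infinite_finite_induct)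
  case (infinite A) then show ?case by (simp only: sum.infinite[OF infinite] glift_zero[OF assms])
next
  case empty then show ?case by (simp only: sum.empty glift_zero[OF assms])
next
  case (insert x F) then show ?case by (simp only: sum.insert[OF insert(1,2)] glift_add[OF assms])
qed

lemma glift_cs: assumes "modact G sm act" "subgroup K G" "finite (carrier G)"
  "\<forall>k\<in>K. act k v = v" "h \<in> carrier G"
  shows "glift sm G K act v (cs G K h) = act h v"
proof -
  have "glift sm G K act v (cs G K h) = (\<Sum>C\<in>lcos G K. if C = h <# K then act (crep C) v else 0)"
    unfolding glift_def cs_def
    by (rule sum.cong) (auto simp: modact_sm0[OF assms(1)] assms(1)[unfolded modact_def])
  also have "\<dots> = act (crep (h <# K)) v"
    using finite_lcos[OF assms(3)] lcosI[OF assms(5)] by (simp add: sum.delta)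
  also have "\<dots> = act h v"
  proof -
    have "crep (h <# K) \<in> h <# K" using crep_mem[OF assms(2)] lcosI[OF assms(5)] by simp
    then obtain k where k: "k \<in> K" "crep (h <# K) = h \<otimes> k" by (auto simp: l_coset_def)
    have "act (h \<otimes> k) v = act h (act k v)"
      using assms(1,5) k(1) subgroup.subset[OF assms(2)] by (auto simp: modact_def)
    then show ?thesis using k assms(4) by simp
  qed
  finally show ?thesis .
qed

lemma glift_pact: assumes "modact G sm act" "subgroup K G" "finite (carrier G)"
  "\<forall>k\<in>K. act k v = v" "g \<in> carrier G" "x \<in> pm G K"
  shows "glift sm G K act v (pact G K g x) = act g (glift sm G K act v x)"
proof -
  have x: "x = (\<Sum>C\<in>lcos G K. zsc (x C) (cs G K (crep C)))"
    by (rule pm_decomp[OF assms(2,3,6)])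
  have "pact G K g x = (\<Sum>C\<in>lcos G K. zsc (x C) (cs G K (g \<otimes> crep C)))"
    by (subst x) (auto simp: pact_sum pact_zsc pact_cs[OF assms(2,5) crep_carrier[OF assms(2)]] intro!: sum.cong)
  then have "glift sm G K act v (pact G K g x) = (\<Sum>C\<in>lcos G K. sm (x C) (act (g \<otimes> crep C) v))"
    by (simp add: glift_sum[OF assms(1)] glift_zsc[OF assms(1)] glift_cs[OF assms(1-4)]
        crep_carrier[OF assms(2)] assms(5))
  also have "\<dots> = (\<Sum>C\<in>lcos G K. act g (sm (x C) (act (crep C) v)))"
    using assms(1,5) crep_carrier[OF assms(2)] by (auto simp: modact_def intro!: sum.cong)
  also have "\<dots> = act g (glift sm G K act v x)"
    by (simp add: glift_def modact_act_sum[OF assms(1,5)])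
  finally show ?thesis .
qed

lemma pm_H1:
  assumes K: "subgroup K G" and fin: "finite (carrier G)" and H: "subgroup H G"
    and f_pm: "\<forall>h\<in>H. f h \<in> pm G K"
    and f_cr: "\<forall>g\<in>H. \<forall>h\<in>H. f (g \<otimes> h) = f g + pact G K g (f h)"
  shows "\<exists>q\<in>pm G K. \<forall>g\<in>H. f g = pact G K g q - q"
proof -
  have finH: "finite H" using fin subgroup.subset[OF H] finite_subset by blast
  have oneH: "\<one> \<in> H" using H subgroup.one_closed by blast
  define N where "N = int (card H)"
  have Npos: "N > 0" unfolding N_def using finH oneH card_gt_0_iff by fastforce
  define t where "t = (\<lambda>C. - (\<Sum>h\<in>H. f h C))"
  define q where "q = (\<lambda>C. t C div N)"
  have key: "N * f g C = t (inv g <# C) - t C" if g: "g \<in> H" and C: "C \<in> lcos G K" for g C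
  proof -
    have gc: "g \<in> carrier G" using g H subgroup.subset by blast
    have bij: "bij_betw (\<lambda>h. g \<otimes> h) H H"
    proof (rule bij_betw_byWitness[where f' = "\<lambda>h. inv g \<otimes> h"])
      show "\<forall>a\<in>H. inv g \<otimes> (g \<otimes> a) = a" using gc subgroup.subset[OF H]
        by (auto simp: m_assoc[symmetric])
      show "\<forall>a'\<in>H. g \<otimes> (inv g \<otimes> a') = a'" using gc subgroup.subset[OF H]
        by (auto simp: m_assoc[symmetric])
      show "(\<otimes>) g ` H \<subseteq> H" using subgroup.m_closed[OF H g] by auto
      show "(\<otimes>) (inv g) ` H \<subseteq> H" using subgroup.m_closed[OF H subgroup.m_inv_closed[OF H g]] by auto
    qed
    have "(\<Sum>h\<in>H. f (g \<otimes> h) C) = (\<Sum>h\<in>H. f h C)"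
      using sum.reindex_bij_betw[OF bij, of "\<lambda>h. f h C"] by simp
    moreover have "(\<Sum>h\<in>H. f (g \<otimes> h) C) = (\<Sum>h\<in>H. f g C + f h (inv g <# C))"
    proof (rule sum.cong)
      fix h assume h: "h \<in> H"
      show "f (g \<otimes> h) C = f g C + f h (inv g <# C)"
        using f_cr g h C by (simp add: pact_def)
    qed simp
    ultimately have "N * f g C + (\<Sum>h\<in>H. f h (inv g <# C)) = (\<Sum>h\<in>H. f h C)"
      by (simp add: sum.distrib N_def)
    then show ?thesis unfolding t_def by simp
  qed
  have q_pm: "q \<in> pm G K"
    using f_pm by (auto simp: pm_def q_def t_def)
  have "f g = pact G K g q - q" if g: "g \<in> H" for g
  proof
    fix C
    show "f g C = (pact G K g q - q) C"
    proof (cases "C \<in> lcos G K")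
      case True
      have "f g C = q (inv g <# C) - q C"
        unfolding q_def by (rule int_div_lemma[OF Npos key[OF g True]])
      then show ?thesis using True by (simp add: pact_def)
    next
      case False
      then show ?thesis using f_pm g q_pm by (simp add: pact_def pm_def)
    qed
  qed
  then show ?thesis using q_pm by blast
qed

end


locale dih =
  fixes m :: nat
  assumes odd_m: "odd m" and m_pos: "0 < m"
begin

abbreviation n :: int where "n \<equiv> int (2 * m)"

definition D :: "(int \<times> bool) monoid" where "D = dihedral (int (2 * m))"

definition rot :: "int \<Rightarrow> int \<times> bool" where "rot i = (i mod n, False)"
definition rfl :: "int \<Rightarrow> int \<times> bool" where "rfl i = (i mod n, True)"

lemma n_pos: "n > 0" using m_pos by simp
lemma n_ge2: "n \<ge> 2" using m_pos by simp

lemma carrier_D: "carrier D = {0..<n} \<times> UNIV"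
  by (simp add: D_def dihedral_def)
lemma mult_D: "x \<otimes>\<^bsub>D\<^esub> y = dmul n x y"
  by (simp add: D_def dihedral_def)
lemma one_D: "\<one>\<^bsub>D\<^esub> = (0, False)"
  by (simp add: D_def dihedral_def)

lemma rot_carrier[simp]: "rot i \<in> carrier D"
  using n_pos by (simp add: rot_def carrier_D)
lemma rfl_carrier[simp]: "rfl i \<in> carrier D"
  using n_pos by (simp add: rfl_def carrier_D)

lemma carrier_cases: assumes "x \<in> carrier D"
  obtains j where "x = rot j" "0 \<le> j" "j < n" | j where "x = rfl j" "0 \<le> j" "j < n"
proof -
  obtain j e where x: "x = (j, e)" "0 \<le> j" "j < n" using assms by (cases x) (auto simp: carrier_D)
  then have "j mod n = j" by simp
  then show ?thesis using that x by (cases e) (auto simp: rot_def rfl_def)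
qed

lemma rot_rot[simp]: "rot i \<otimes>\<^bsub>D\<^esub> rot j = rot (i + j)"
  by (simp add: mult_D dmul_def rot_def mod_add_eq)
lemma rot_rfl[simp]: "rot i \<otimes>\<^bsub>D\<^esub> rfl j = rfl (i + j)"
  by (simp add: mult_D dmul_def rot_def rfl_def mod_add_eq)
lemma rfl_rot[simp]: "rfl i \<otimes>\<^bsub>D\<^esub> rot j = rfl (i - j)"
  by (simp add: mult_D dmul_def rot_def rfl_def mod_diff_eq)
lemma rfl_rfl[simp]: "rfl i \<otimes>\<^bsub>D\<^esub> rfl j = rot (i - j)"
  by (simp add: mult_D dmul_def rot_def rfl_def mod_diff_eq)

lemma rot_eq_iff: "rot i = rot j \<longleftrightarrow> i mod n = j mod n" by (simp add: rot_def)
lemma rfl_eq_iff: "rfl i = rfl j \<longleftrightarrow> i mod n = j mod n" by (simp add: rfl_def)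
lemma rot_neq_rfl[simp]: "rot i \<noteq> rfl j" "rfl j \<noteq> rot i" by (auto simp: rot_def rfl_def)
lemma snd_rot[simp]: "snd (rot i) = False" by (simp add: rot_def)
lemma snd_rfl[simp]: "snd (rfl i) = True" by (simp add: rfl_def)

lemma rot_mod: "rot (i mod n) = rot i" by (simp add: rot_def)
lemma rfl_mod: "rfl (i mod n) = rfl i" by (simp add: rfl_def)
lemma rot_add_n: "rot (i + n) = rot i" by (simp add: rot_def)
lemma rfl_add_n: "rfl (i + n) = rfl i" by (simp add: rfl_def)

lemma one_rot: "\<one>\<^bsub>D\<^esub> = rot 0" by (simp add: one_D rot_def)

lemma group_D: "group D"
proof (rule groupI)
  fix x y assume "x \<in> carrier D" "y \<in> carrier D"
  then show "x \<otimes>\<^bsub>D\<^esub> y \<in> carrier D"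
    by (elim carrier_cases) auto
next
  show "\<one>\<^bsub>D\<^esub> \<in> carrier D" by (simp add: one_rot)
next
  fix x y z assume "x \<in> carrier D" "y \<in> carrier D" "z \<in> carrier D"
  then show "x \<otimes>\<^bsub>D\<^esub> y \<otimes>\<^bsub>D\<^esub> z = x \<otimes>\<^bsub>D\<^esub> (y \<otimes>\<^bsub>D\<^esub> z)"
    by (elim carrier_cases) (auto simp: algebra_simps diff_diff_eq2)
next
  fix x assume "x \<in> carrier D"
  then show "\<one>\<^bsub>D\<^esub> \<otimes>\<^bsub>D\<^esub> x = x"
    by (elim carrier_cases) (auto simp: one_rot)
next
  fix x assume "x \<in> carrier D"
  then show "\<exists>y\<in>carrier D. y \<otimes>\<^bsub>D\<^esub> x = \<one>\<^bsub>D\<^esub>"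
  proof (elim carrier_cases)
    fix j assume "x = rot j"
    then show ?thesis by (intro bexI[of _ "rot (- j)"]) (auto simp: one_rot)
  next
    fix j assume "x = rfl j"
    then show ?thesis by (intro bexI[of _ "rfl j"]) (auto simp: one_rot)
  qed
qed

sublocale D: group D by (rule group_D)

lemma inv_rot[simp]: "inv\<^bsub>D\<^esub> (rot i) = rot (- i)"
  by (rule D.inv_equality) (auto simp: one_rot)
lemma inv_rfl[simp]: "inv\<^bsub>D\<^esub> (rfl i) = rfl i"
  by (rule D.inv_equality) (auto simp: one_rot)

lemma dsigma_rot: "dsigma = rot 1"
  using n_ge2 by (simp add: dsigma_def rot_def)
lemma dtau_rfl: "dtau = rfl 0"
  by (simp add: dtau_def rfl_def)
lemma pow_rot[simp]: "dsigma [^]\<^bsub>D\<^esub> (a::nat) = rot (int a)"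
proof (induction a)
  case 0 then show ?case by (simp add: one_rot)
next
  case (Suc a) then show ?case by (simp add: dsigma_rot add.commute)
qed

lemma rot_n[simp]: "rot n = rot 0" by (simp add: rot_def)


lemma rot_sub_n: "rot (i - n) = rot i" by (simp add: rot_def)
lemma rfl_sub_n: "rfl (i - n) = rfl i" by (simp add: rfl_def)
lemma rot_neg_m: "rot (- int m) = rot (int m)"
  using rot_sub_n[of "int m"] by simp
lemma rot_mm: "rot (int m + int m) = rot 0"
  by (simp add: rot_def)
lemma rot_2m: "rot (2 * int m) = rot 0"
  by (simp add: rot_def)
lemma rfl_neg_m: "rfl (a - int m) = rfl (a + int m)"
  using rfl_sub_n[of "a + int m"] by (simp add: algebra_simps)
lemma rot_neg_m': "rot (a - int m) = rot (a + int m)"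
  using rot_sub_n[of "a + int m"] by (simp add: algebra_simps)

lemma r_one_rot[simp]: "g \<in> carrier D \<Longrightarrow> g \<otimes>\<^bsub>D\<^esub> rot 0 = g"
  using D.r_one by (simp add: one_rot)
lemma l_one_rot[simp]: "g \<in> carrier D \<Longrightarrow> rot 0 \<otimes>\<^bsub>D\<^esub> g = g"
  using D.l_one by (simp add: one_rot)

definition S :: "(int \<times> bool) set" where "S = {\<one>\<^bsub>D\<^esub>, dsigma [^]\<^bsub>D\<^esub> m}"
definition T :: "(int \<times> bool) set" where "T = {\<one>\<^bsub>D\<^esub>, dtau}"
definition U :: "(int \<times> bool) set" where "U = {\<one>\<^bsub>D\<^esub>}"
definition K1 :: "(int \<times> bool) set" where "K1 = {rot 0, rfl (int m)}"
definition K2 :: "(int \<times> bool) set" where "K2 = range rot"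

lemma S_eq: "S = {rot 0, rot (int m)}" by (simp add: S_def one_rot)
lemma T_eq: "T = {rot 0, rfl 0}" by (simp add: T_def one_rot dtau_rfl)
lemma U_eq: "U = {rot 0}" by (simp add: U_def one_rot)

lemma subgroup_S: "subgroup S D"
proof (rule subgroup.intro)
  show "S \<subseteq> carrier D" by (simp add: S_eq)
  show "\<one>\<^bsub>D\<^esub> \<in> S" by (simp add: S_eq one_rot)
  fix x y assume "x \<in> S" "y \<in> S"
  then show "x \<otimes>\<^bsub>D\<^esub> y \<in> S" by (auto simp: S_eq rot_mm rot_2m)
next
  fix x assume "x \<in> S"
  then show "inv\<^bsub>D\<^esub> x \<in> S" by (auto simp: S_eq rot_neg_m)
qed

lemma subgroup_T: "subgroup T D"
proof (rule subgroup.intro)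
  show "T \<subseteq> carrier D" by (simp add: T_eq)
  show "\<one>\<^bsub>D\<^esub> \<in> T" by (simp add: T_eq one_rot)
  fix x y assume "x \<in> T" "y \<in> T"
  then show "x \<otimes>\<^bsub>D\<^esub> y \<in> T" by (auto simp: T_eq)
next
  fix x assume "x \<in> T"
  then show "inv\<^bsub>D\<^esub> x \<in> T" by (auto simp: T_eq)
qed

lemma subgroup_U: "subgroup U D"
proof (rule subgroup.intro)
  show "U \<subseteq> carrier D" by (simp add: U_eq)
  show "\<one>\<^bsub>D\<^esub> \<in> U" by (simp add: U_eq one_rot)
  fix x y assume "x \<in> U" "y \<in> U"
  then show "x \<otimes>\<^bsub>D\<^esub> y \<in> U" by (auto simp: U_eq)
next
  fix x assume "x \<in> U"
  then show "inv\<^bsub>D\<^esub> x \<in> U" by (auto simp: U_eq)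
qed

lemma subgroup_K1: "subgroup K1 D"
proof (rule subgroup.intro)
  show "K1 \<subseteq> carrier D" by (simp add: K1_def)
  show "\<one>\<^bsub>D\<^esub> \<in> K1" by (simp add: K1_def one_rot)
  fix x y assume "x \<in> K1" "y \<in> K1"
  then show "x \<otimes>\<^bsub>D\<^esub> y \<in> K1" by (auto simp: K1_def)
next
  fix x assume "x \<in> K1"
  then show "inv\<^bsub>D\<^esub> x \<in> K1" by (auto simp: K1_def)
qed

lemma subgroup_K2: "subgroup K2 D"
proof (rule subgroup.intro)
  show "K2 \<subseteq> carrier D" by (auto simp: K2_def)
  show "\<one>\<^bsub>D\<^esub> \<in> K2" by (simp add: K2_def one_rot)
  fix x y assume "x \<in> K2" "y \<in> K2"
  then show "x \<otimes>\<^bsub>D\<^esub> y \<in> K2" by (auto simp: K2_def)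
next
  fix x assume "x \<in> K2"
  then show "inv\<^bsub>D\<^esub> x \<in> K2" by (auto simp: K2_def)
qed

lemma finite_D: "finite (carrier D)" by (simp add: carrier_D)

lemma lcoset_S: "g \<in> carrier D \<Longrightarrow> g <#\<^bsub>D\<^esub> S = {g, g \<otimes>\<^bsub>D\<^esub> rot (int m)}"
  by (auto simp: l_coset_def S_eq)
lemma lcoset_T: "g \<in> carrier D \<Longrightarrow> g <#\<^bsub>D\<^esub> T = {g, g \<otimes>\<^bsub>D\<^esub> rfl 0}"
  by (auto simp: l_coset_def T_eq)
lemma lcoset_U: "g \<in> carrier D \<Longrightarrow> g <#\<^bsub>D\<^esub> U = {g}"
  by (auto simp: l_coset_def U_eq)
lemma lcoset_K1: "g \<in> carrier D \<Longrightarrow> g <#\<^bsub>D\<^esub> K1 = {g, g \<otimes>\<^bsub>D\<^esub> rfl (int m)}"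
  by (auto simp: l_coset_def K1_def)
lemma lcoset_K2: assumes "g \<in> carrier D" shows "g <#\<^bsub>D\<^esub> K2 = {h \<in> carrier D. snd h = snd g}"
proof -
  have "g <#\<^bsub>D\<^esub> K2 = (\<lambda>i. g \<otimes>\<^bsub>D\<^esub> rot i) ` UNIV" by (auto simp: l_coset_def K2_def)
  also have "\<dots> = {h \<in> carrier D. snd h = snd g}"
  proof -
    { fix h assume h: "h \<in> carrier D" "snd h = snd g"
      have "\<exists>i. h = g \<otimes>\<^bsub>D\<^esub> rot i"
        using h(1)
      proof (elim carrier_cases)
        fix j assume hj: "h = rot j"
        show ?thesis using assms
        proof (elim carrier_cases)
          fix k assume "g = rot k" then show ?thesis using hj by (intro exI[of _ "j - k"]) simp
        next
          fix k assume "g = rfl k" then show ?thesis using hj h(2) by simp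
        qed
      next
        fix j assume hj: "h = rfl j"
        show ?thesis using assms
        proof (elim carrier_cases)
          fix k assume "g = rot k" then show ?thesis using hj h(2) by simp
        next
          fix k assume "g = rfl k" then show ?thesis using hj by (intro exI[of _ "k - j"]) simp
        qed
      qed }
    moreover have "g \<otimes>\<^bsub>D\<^esub> rot i \<in> carrier D \<and> snd (g \<otimes>\<^bsub>D\<^esub> rot i) = snd g" for i
      using assms by (elim carrier_cases) auto
    ultimately show ?thesis by blast
  qed
  finally show ?thesis .
qed

lemma mod_m_lemma: fixes a b :: int
  shows "(b mod n = a mod n \<or> b mod n = (a + int m) mod n) \<longleftrightarrow> int m dvd (a - b)"
proof
  assume "b mod n = a mod n \<or> b mod n = (a + int m) mod n"
  then have "n dvd (a - b) \<or> n dvd (a + int m - b)"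
    by (metis mod_eq_dvd_iff)
  then show "int m dvd (a - b)"
  proof
    assume "n dvd (a - b)" then show ?thesis by (metis dvd_mult_right mult_2 of_nat_mult of_nat_numeral dvd_trans dvd_triv_left mult.commute mult_2_right)
  next
    assume "n dvd (a + int m - b)"
    then have "int m dvd (a + int m - b)" by (metis dvd_mult_right mult.commute of_nat_mult)
    then show ?thesis by (metis add_diff_cancel_left' diff_add_eq dvd_add_triv_left_iff add.commute diff_diff_eq2)
  qed
next
  assume "int m dvd (a - b)"
  then obtain t where t: "a - b = int m * t" by (auto simp: dvd_def)
  show "b mod n = a mod n \<or> b mod n = (a + int m) mod n"
  proof (cases "even t")
    case True
    then obtain s where "t = 2 * s" by auto
    then have "a - b = n * s" using t by simp
    then have "n dvd (a - b)" by simp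
    then show ?thesis by (metis mod_eq_dvd_iff)
  next
    case False
    then obtain s where "t = 2 * s + 1" using oddE by blast
    then have "a + int m - b = n * (s + 1)" using t by (simp add: algebra_simps)
    then have "n dvd (a + int m - b)" by simp
    then show ?thesis by (metis mod_eq_dvd_iff)
  qed
qed

lemma rotS_eq: "rot a <#\<^bsub>D\<^esub> S = rot b <#\<^bsub>D\<^esub> S \<longleftrightarrow> int m dvd (a - b)"
proof -
  have "rot a <#\<^bsub>D\<^esub> S = rot b <#\<^bsub>D\<^esub> S \<longleftrightarrow> rot b \<in> rot a <#\<^bsub>D\<^esub> S"
    using D.lcos_mem_iff[OF subgroup_S D.lcosI[OF rot_carrier[of a]] rot_carrier[of b]] by metis
  also have "\<dots> \<longleftrightarrow> (b mod n = a mod n \<or> b mod n = (a + int m) mod n)"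
    by (simp add: lcoset_S rot_eq_iff)
  finally show ?thesis using mod_m_lemma by simp
qed

lemma rflS_eq: "rfl a <#\<^bsub>D\<^esub> S = rfl b <#\<^bsub>D\<^esub> S \<longleftrightarrow> int m dvd (a - b)"
proof -
  have "rfl a <#\<^bsub>D\<^esub> S = rfl b <#\<^bsub>D\<^esub> S \<longleftrightarrow> rfl b \<in> rfl a <#\<^bsub>D\<^esub> S"
    using D.lcos_mem_iff[OF subgroup_S D.lcosI[OF rfl_carrier[of a]] rfl_carrier[of b]] by metis
  also have "\<dots> \<longleftrightarrow> (b mod n = a mod n \<or> b mod n = (a + int m) mod n)"
    by (simp add: lcoset_S rfl_eq_iff rfl_neg_m)
  finally show ?thesis using mod_m_lemma by simp
qed

lemma rot_rflS_neq[simp]: "rot a <#\<^bsub>D\<^esub> S \<noteq> rfl b <#\<^bsub>D\<^esub> S" "rfl b <#\<^bsub>D\<^esub> S \<noteq> rot a <#\<^bsub>D\<^esub> S"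
proof -
  have "rfl b \<notin> rot a <#\<^bsub>D\<^esub> S" by (simp add: lcoset_S)
  then show "rot a <#\<^bsub>D\<^esub> S \<noteq> rfl b <#\<^bsub>D\<^esub> S" "rfl b <#\<^bsub>D\<^esub> S \<noteq> rot a <#\<^bsub>D\<^esub> S"
    using D.lcos_self_mem[OF subgroup_S, of "rfl b"] by auto
qed

lemma rotT_eq: "rot a <#\<^bsub>D\<^esub> T = rot b <#\<^bsub>D\<^esub> T \<longleftrightarrow> a mod n = b mod n"
proof -
  have "rot a <#\<^bsub>D\<^esub> T = rot b <#\<^bsub>D\<^esub> T \<longleftrightarrow> rot b \<in> rot a <#\<^bsub>D\<^esub> T"
    using D.lcos_mem_iff[OF subgroup_T D.lcosI[OF rot_carrier[of a]] rot_carrier[of b]] by metis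
  then show ?thesis by (auto simp: lcoset_T rot_eq_iff)
qed

lemma rflT_eq: "rfl a <#\<^bsub>D\<^esub> T = rot a <#\<^bsub>D\<^esub> T"
  by (simp add: lcoset_T insert_commute)


end


context dih
begin

definition I where "I = {(y1, y2). y1 \<in> pm D S \<and> y2 \<in> pm D T \<and> aug D S y1 + aug D T y2 = 0}"
definition R where "R = pm D U \<times> pm D S \<times> (UNIV :: int set)"
definition iact where "iact = (\<lambda>g (y1, y2). (pact D S g y1, pact D T g y2))"
definition ract where "ract = (\<lambda>g (x1, x2, x3::int). (pact D U g x1, pact D S g x2, x3))"
definition v1 where "v1 = (cs D S \<one>\<^bsub>D\<^esub>, - cs D T \<one>\<^bsub>D\<^esub>)"
definition v2 where "v2 = (cs D S \<one>\<^bsub>D\<^esub> + cs D S (dsigma [^]\<^bsub>D\<^esub> (2::nat)),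
                - (cs D T \<one>\<^bsub>D\<^esub> + cs D T (dsigma [^]\<^bsub>D\<^esub> m)))"
definition v3 where "v3 = ((\<Sum>i<m. cs D S (dsigma [^]\<^bsub>D\<^esub> i) + cs D S (dsigma [^]\<^bsub>D\<^esub> i \<otimes>\<^bsub>D\<^esub> dtau)),
                - (\<Sum>i<2 * m. cs D T (dsigma [^]\<^bsub>D\<^esub> i)))"
definition Psi where "Psi = (\<lambda>(x1, x2, x3). plift D U iact v1 x1 + plift D S iact v2 x2 + zsc2 x3 v3)"
definition E where "E = {x \<in> R. Psi x = 0}"

lemma iact_Pair[simp]: "iact g (y1, y2) = (pact D S g y1, pact D T g y2)"
  by (simp add: iact_def)
lemma ract_Pair[simp]: "ract g (x1, x2, x3) = (pact D U g x1, pact D S g x2, x3)"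
  by (simp add: ract_def)

lemma modact_iact: "modact D zsc2 iact"
  unfolding modact_def
  by (auto simp: iact_def zsc2_def zsc_add2 zsc_add zsc_zsc split: prod.splits
      simp: D.pact_add D.pact_zsc D.pact_mult[OF subgroup_S] D.pact_mult[OF subgroup_T])

lemma modact_ract: "modact D zsc3 ract"
  unfolding modact_def
  by (auto simp: ract_def zsc3_def zsc_add2 zsc_add zsc_zsc algebra_simps split: prod.splits
      simp: D.pact_add D.pact_zsc D.pact_mult[OF subgroup_S] D.pact_mult[OF subgroup_U])


lemma crep_single[simp]: "crep {h} = h" by (simp add: crep_def)

lemma lcos_U: "lcos D U = (\<lambda>h. {h}) ` carrier D"
proof -
  have "lcos D U = (\<lambda>g. g <#\<^bsub>D\<^esub> U) ` carrier D" by (auto simp: lcos_def)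
  also have "\<dots> = (\<lambda>h. {h}) ` carrier D" by (rule image_cong) (simp_all add: lcoset_U)
  finally show ?thesis .
qed

lemma rot_m_neq: assumes "g \<in> carrier D" shows "g \<otimes>\<^bsub>D\<^esub> rot (int m) \<noteq> g"
proof -
  have nd: "\<not> n dvd int m" using m_pos by (auto dest: zdvd_imp_le)
  have A: "(a + int m) mod n \<noteq> a mod n" for a
    using nd mod_eq_dvd_iff[of "a + int m" n a] by simp
  have B: "(a - int m) mod n \<noteq> a mod n" for a
    using nd mod_eq_dvd_iff[of "a - int m" n a] by simp
  show ?thesis using assms
  proof (elim carrier_cases)
    fix j assume "g = rot j"
    then show ?thesis using A[of j] by (simp only: rot_rot rot_eq_iff) simp
  next
    fix j assume "g = rfl j"
    then show ?thesis using B[of j] by (simp only: rfl_rot rfl_eq_iff) simp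
  qed
qed

lemma rfl0_neq: "g \<in> carrier D \<Longrightarrow> g \<otimes>\<^bsub>D\<^esub> rfl 0 \<noteq> g"
  by (elim carrier_cases) auto

lemma S_pair: assumes "C \<in> lcos D S"
  shows "C = {crep C, crep C \<otimes>\<^bsub>D\<^esub> rot (int m)}" "crep C \<otimes>\<^bsub>D\<^esub> rot (int m) \<noteq> crep C"
  using D.crep_coset[OF subgroup_S assms] lcoset_S D.crep_carrier[OF subgroup_S assms]
    rot_m_neq by auto

lemma sum_pair: assumes "a \<noteq> b" shows "(\<Sum>h\<in>{a, b}. F h) = F a + F b"
  using assms by simp

lemma sum_over_pair: assumes "A = {a, b}" "a \<noteq> b" shows "(\<Sum>h\<in>A. F h) = F a + F b"
  using assms by simp

lemma sum_restrict_carrier: assumes "A \<subseteq> carrier D"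
  shows "(\<Sum>h\<in>carrier D. if h \<in> A then F h else 0) = (\<Sum>h\<in>A. F h)"
proof -
  have "(\<Sum>h\<in>carrier D. if h \<in> A then F h else 0) = (\<Sum>h\<in>carrier D \<inter> A. F h)"
    using finite_D by (simp add: sum.inter_restrict)
  also have "carrier D \<inter> A = A" using assms by auto
  finally show ?thesis .
qed

lemma sumU: fixes x1 :: "(int \<times> bool) set \<Rightarrow> int"
  assumes K: "subgroup K D" and C0: "C0 \<in> lcos D K"
  shows "(\<Sum>C\<in>lcos D U. x1 C * (if C0 = crep C <#\<^bsub>D\<^esub> K then 1 else 0)) = (\<Sum>h\<in>C0. x1 {h})"
proof -
  have inj: "inj_on (\<lambda>h. {h}) (carrier D)" by (auto simp: inj_on_def)
  have "(\<Sum>C\<in>lcos D U. x1 C * (if C0 = crep C <#\<^bsub>D\<^esub> K then 1 else 0))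
      = (\<Sum>h\<in>carrier D. x1 {h} * (if C0 = h <#\<^bsub>D\<^esub> K then 1 else 0))"
    by (simp add: lcos_U sum.reindex[OF inj])
  also have "\<dots> = (\<Sum>h\<in>carrier D. if h \<in> C0 then x1 {h} else 0)"
    using D.lcos_mem_iff[OF K C0] by (intro sum.cong) auto
  also have "\<dots> = (\<Sum>h\<in>C0. x1 {h})"
    by (rule sum_restrict_carrier[OF D.lcos_sub[OF K C0]])
  finally show ?thesis .
qed

lemma sumS: fixes x2 :: "(int \<times> bool) set \<Rightarrow> int"
  assumes C0: "C0 \<in> lcos D T"
  shows "(\<Sum>C\<in>lcos D S. x2 C * ((if C0 = crep C <#\<^bsub>D\<^esub> T then 1 else 0)
            + (if C0 = (crep C \<otimes>\<^bsub>D\<^esub> rot (int m)) <#\<^bsub>D\<^esub> T then 1 else 0)))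
       = (\<Sum>h\<in>C0. x2 (h <#\<^bsub>D\<^esub> S))"
proof -
  have "(\<Sum>C\<in>lcos D S. x2 C * ((if C0 = crep C <#\<^bsub>D\<^esub> T then 1 else 0)
            + (if C0 = (crep C \<otimes>\<^bsub>D\<^esub> rot (int m)) <#\<^bsub>D\<^esub> T then 1 else 0)))
      = (\<Sum>C\<in>lcos D S. \<Sum>h\<in>C. if h \<in> C0 then x2 (h <#\<^bsub>D\<^esub> S) else 0)"
  proof (rule sum.cong)
    fix C assume C: "C \<in> lcos D S"
    have cc: "crep C \<in> carrier D" "crep C \<otimes>\<^bsub>D\<^esub> rot (int m) \<in> carrier D"
      using D.crep_carrier[OF subgroup_S C] by auto
    have e1: "crep C <#\<^bsub>D\<^esub> S = C" by (rule D.crep_coset[OF subgroup_S C])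
    have mem: "crep C \<otimes>\<^bsub>D\<^esub> rot (int m) \<in> C"
      using S_pair(1)[OF C] by (rule ssubst[where P = "\<lambda>X. crep C \<otimes>\<^bsub>D\<^esub> rot (int m) \<in> X"]) simp
    have e2: "(crep C \<otimes>\<^bsub>D\<^esub> rot (int m)) <#\<^bsub>D\<^esub> S = C"
      using D.lcos_eq_mem[OF subgroup_S C mem] .
    have "(\<Sum>h\<in>C. if h \<in> C0 then x2 (h <#\<^bsub>D\<^esub> S) else 0)
        = (if crep C \<in> C0 then x2 (crep C <#\<^bsub>D\<^esub> S) else 0)
          + (if crep C \<otimes>\<^bsub>D\<^esub> rot (int m) \<in> C0 then x2 ((crep C \<otimes>\<^bsub>D\<^esub> rot (int m)) <#\<^bsub>D\<^esub> S) else 0)"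
      by (rule sum_over_pair[OF S_pair(1)[OF C] S_pair(2)[OF C, symmetric]])
    also have "\<dots> = (if crep C \<in> C0 then x2 C else 0) + (if crep C \<otimes>\<^bsub>D\<^esub> rot (int m) \<in> C0 then x2 C else 0)"
      by (simp only: e1 e2)
    finally have sp: "(\<Sum>h\<in>C. if h \<in> C0 then x2 (h <#\<^bsub>D\<^esub> S) else 0)
        = (if crep C \<in> C0 then x2 C else 0) + (if crep C \<otimes>\<^bsub>D\<^esub> rot (int m) \<in> C0 then x2 C else 0)" .
    then show "x2 C * ((if C0 = crep C <#\<^bsub>D\<^esub> T then 1 else 0)
            + (if C0 = (crep C \<otimes>\<^bsub>D\<^esub> rot (int m)) <#\<^bsub>D\<^esub> T then 1 else 0))
        = (\<Sum>h\<in>C. if h \<in> C0 then x2 (h <#\<^bsub>D\<^esub> S) else 0)"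
      unfolding sp using D.lcos_mem_iff[OF subgroup_T C0 cc(1)] D.lcos_mem_iff[OF subgroup_T C0 cc(2)]
      by (simp add: algebra_simps eq_commute[of C0])
  qed simp
  also have "\<dots> = (\<Sum>h\<in>carrier D. if h \<in> C0 then x2 (h <#\<^bsub>D\<^esub> S) else 0)"
    by (rule D.sum_carrier_lcos[OF subgroup_S finite_D, symmetric])
  also have "\<dots> = (\<Sum>h\<in>C0. x2 (h <#\<^bsub>D\<^esub> S))"
    by (rule sum_restrict_carrier[OF D.lcos_sub[OF subgroup_T C0]])
  finally show ?thesis .
qed

lemma dvd_neg_eq: "(x::int) = - y \<Longrightarrow> (k dvd x) = (k dvd y)" by simp

lemma S_shift: assumes "g \<in> carrier D" "h \<in> carrier D"
  shows "g <#\<^bsub>D\<^esub> S = (h \<otimes>\<^bsub>D\<^esub> rot 2) <#\<^bsub>D\<^esub> S \<longleftrightarrow> h <#\<^bsub>D\<^esub> S = (g \<otimes>\<^bsub>D\<^esub> rot (-2)) <#\<^bsub>D\<^esub> S"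
  using assms(1)
proof (elim carrier_cases)
  fix a assume ga: "g = rot a"
  show ?thesis using assms(2)
  proof (elim carrier_cases)
    fix b assume hb: "h = rot b"
    show ?thesis unfolding ga hb rot_rot rotS_eq by (rule dvd_neg_eq) simp
  next
    fix b assume hb: "h = rfl b"
    show ?thesis unfolding ga hb rot_rot rfl_rot by simp
  qed
next
  fix a assume ga: "g = rfl a"
  show ?thesis using assms(2)
  proof (elim carrier_cases)
    fix b assume hb: "h = rot b"
    show ?thesis unfolding ga hb rot_rot rfl_rot by simp
  next
    fix b assume hb: "h = rfl b"
    show ?thesis unfolding ga hb rfl_rot rflS_eq by (rule dvd_neg_eq) simp
  qed
qed

lemma iact_v1: "g \<in> carrier D \<Longrightarrow> iact g v1 = (cs D S g, - cs D T g)"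
  by (simp add: v1_def one_rot D.pact_uminus D.pact_cs[OF subgroup_S] D.pact_cs[OF subgroup_T])

lemma iact_v2: "g \<in> carrier D \<Longrightarrow> iact g v2 = (cs D S g + cs D S (g \<otimes>\<^bsub>D\<^esub> rot 2),
     - (cs D T g + cs D T (g \<otimes>\<^bsub>D\<^esub> rot (int m))))"
  by (simp add: v2_def one_rot D.pact_uminus D.pact_add D.pact_diff D.pact_cs[OF subgroup_S] D.pact_cs[OF subgroup_T]
      D.m_assoc)

lemma count_mod_m: "(\<Sum>i<m. if int m dvd (j - int i) then 1 else 0) = (1::int)"
proof -
  have "(\<Sum>i<m. if int m dvd (j - int i) then 1 else (0::int)) = (\<Sum>i<m. if i = nat (j mod int m) then 1 else 0)"
  proof (rule sum.cong)
    fix i assume i: "i \<in> {..<m}"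
    have "int m dvd (j - int i) \<longleftrightarrow> j mod int m = int i mod int m"
      by (simp add: mod_eq_dvd_iff)
    also have "int i mod int m = int i" using i by simp
    also have "j mod int m = int i \<longleftrightarrow> i = nat (j mod int m)" using m_pos by auto
    finally show "(if int m dvd (j - int i) then 1 else (0::int)) = (if i = nat (j mod int m) then 1 else 0)"
      by simp
  qed simp
  also have "\<dots> = 1" using m_pos by (simp add: nat_less_iff)
  finally show ?thesis .
qed

lemma count_mod_n: assumes "0 \<le> j" "j < n" shows "(\<Sum>i<2 * m. if j mod n = int i mod n then 1 else 0) = (1::int)"
proof -
  have "(\<Sum>i<2*m. if j mod n = int i mod n then 1 else (0::int)) = (\<Sum>i<2*m. if i = nat j then 1 else 0)"
    using assms by (intro sum.cong) auto
  also have "\<dots> = 1" using assms by simp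
  finally show ?thesis .
qed

lemma v3_fst: "fst v3 = (\<lambda>C. if C \<in> lcos D S then 1 else 0)"
proof
  fix C
  show "fst v3 C = (if C \<in> lcos D S then 1 else 0)"
  proof (cases "C \<in> lcos D S")
    case False
    then show ?thesis
      by (auto simp: v3_def fun_sum_apply cs_def dtau_rfl D.lcosI intro!: sum.neutral)
  next
    case True
    then obtain g where g: "g \<in> carrier D" "C = g <#\<^bsub>D\<^esub> S" by (rule D.lcosE)
    have "fst v3 C = (\<Sum>i<m. (if C = rot (int i) <#\<^bsub>D\<^esub> S then 1 else 0) + (if C = rfl (int i) <#\<^bsub>D\<^esub> S then 1 else 0))"
      by (simp add: v3_def fun_sum_apply cs_def dtau_rfl)
    also have "\<dots> = 1" using g(1)
    proof (elim carrier_cases)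
      fix j assume "g = rot j"
      then show ?thesis using g(2) count_mod_m[of j] by (simp add: rotS_eq)
    next
      fix j assume "g = rfl j"
      then show ?thesis using g(2) count_mod_m[of j] by (simp add: rflS_eq)
    qed
    finally show ?thesis using True by simp
  qed
qed

lemma v3_snd: "snd v3 = (\<lambda>C. if C \<in> lcos D T then -1 else 0)"
proof
  fix C
  show "snd v3 C = (if C \<in> lcos D T then -1 else 0)"
  proof (cases "C \<in> lcos D T")
    case False
    then show ?thesis
      by (auto simp: v3_def fun_sum_apply cs_def D.lcosI intro!: sum.neutral)
  next
    case True
    then obtain g where g: "g \<in> carrier D" "C = g <#\<^bsub>D\<^esub> T" by (rule D.lcosE)
    obtain j where j: "C = rot j <#\<^bsub>D\<^esub> T" "0 \<le> j" "j < n"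
      using g by (elim carrier_cases) (auto simp: rflT_eq)
    have "snd v3 C = - (\<Sum>i<2*m. if C = rot (int i) <#\<^bsub>D\<^esub> T then 1 else 0)"
      by (simp add: v3_def fun_sum_apply cs_def)
    also have "\<dots> = -1" using count_mod_n[OF j(2,3)] by (simp add: j(1) rotT_eq)
    finally show ?thesis using True by simp
  qed
qed

lemma iact_v3: assumes "g \<in> carrier D" shows "iact g v3 = v3"
proof -
  have "iact g v3 = (pact D S g (fst v3), pact D T g (snd v3))" by (cases v3) simp
  moreover have "pact D S g (fst v3) = fst v3"
    unfolding v3_fst using D.lcos_mult[OF subgroup_S D.inv_closed[OF assms]] by (auto simp: pact_def fun_eq_iff)
  moreover have "pact D T g (snd v3) = snd v3"
    unfolding v3_snd using D.lcos_mult[OF subgroup_T D.inv_closed[OF assms]] by (auto simp: pact_def fun_eq_iff)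
  ultimately show ?thesis by simp
qed

lemma v1_fix: "\<forall>k\<in>U. iact k v1 = v1"
  by (simp add: U_eq iact_v1) (simp add: v1_def one_rot)

lemma v2_fix: "\<forall>k\<in>S. iact k v2 = v2"
proof -
  have a: "cs D S (rot (int m)) = cs D S (rot 0)" "cs D S (rot (int m + 2)) = cs D S (rot 2)"
    by (auto simp: cs_def fun_eq_iff rotS_eq)
  have b: "cs D T (rot (int m + int m)) = cs D T (rot 0)" "cs D T (rot (2 * int m)) = cs D T (rot 0)"
    by (simp_all add: rot_mm rot_2m)
  show ?thesis
  proof
    fix k assume "k \<in> S"
    then have "k = rot 0 \<or> k = rot (int m)" by (simp add: S_eq)
    then show "iact k v2 = v2"
      by (auto simp: iact_v2 a b) (simp_all add: v2_def one_rot add.commute)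
  qed
qed

lemma Psi_S: assumes "x1 \<in> pm D U" "x2 \<in> pm D S" "g \<in> carrier D"
  shows "fst (Psi (x1, x2, x3)) (g <#\<^bsub>D\<^esub> S) = x1 {g} + x1 {g \<otimes>\<^bsub>D\<^esub> rot (int m)}
     + x2 (g <#\<^bsub>D\<^esub> S) + x2 ((g \<otimes>\<^bsub>D\<^esub> rot (-2)) <#\<^bsub>D\<^esub> S) + x3"
proof -
  have C0: "g <#\<^bsub>D\<^esub> S \<in> lcos D S" using assms(3) by (rule D.lcosI)
  have g2: "g \<otimes>\<^bsub>D\<^esub> rot (-2) \<in> carrier D" using assms(3) by simp
  have p1: "fst (plift D U iact v1 x1) (g <#\<^bsub>D\<^esub> S) = x1 {g} + x1 {g \<otimes>\<^bsub>D\<^esub> rot (int m)}"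
  proof -
    have "fst (plift D U iact v1 x1) (g <#\<^bsub>D\<^esub> S)
        = (\<Sum>C\<in>lcos D U. x1 C * (if g <#\<^bsub>D\<^esub> S = crep C <#\<^bsub>D\<^esub> S then 1 else 0))"
      by (auto simp: plift_def fst_sum fun_sum_apply zsc2_def iact_v1 D.crep_carrier[OF subgroup_U] cs_def
          intro!: sum.cong)
    also have "\<dots> = (\<Sum>h\<in>g <#\<^bsub>D\<^esub> S. x1 {h})" by (rule sumU[OF subgroup_S C0])
    also have "\<dots> = x1 {g} + x1 {g \<otimes>\<^bsub>D\<^esub> rot (int m)}"
      using assms(3) rot_m_neq by (simp add: lcoset_S)
    finally show ?thesis .
  qed
  have p2: "fst (plift D S iact v2 x2) (g <#\<^bsub>D\<^esub> S) = x2 (g <#\<^bsub>D\<^esub> S) + x2 ((g \<otimes>\<^bsub>D\<^esub> rot (-2)) <#\<^bsub>D\<^esub> S)"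
  proof -
    have "fst (plift D S iact v2 x2) (g <#\<^bsub>D\<^esub> S)
        = (\<Sum>C\<in>lcos D S. x2 C * ((if g <#\<^bsub>D\<^esub> S = crep C <#\<^bsub>D\<^esub> S then 1 else 0)
             + (if g <#\<^bsub>D\<^esub> S = (crep C \<otimes>\<^bsub>D\<^esub> rot 2) <#\<^bsub>D\<^esub> S then 1 else 0)))"
      by (auto simp: plift_def fst_sum fun_sum_apply zsc2_def iact_v2 D.crep_carrier[OF subgroup_S] cs_def
          intro!: sum.cong)
    also have "\<dots> = (\<Sum>C\<in>lcos D S. (if C = g <#\<^bsub>D\<^esub> S then x2 C else 0)
             + (if C = (g \<otimes>\<^bsub>D\<^esub> rot (-2)) <#\<^bsub>D\<^esub> S then x2 C else 0))"
    proof (rule sum.cong)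
      fix C assume C: "C \<in> lcos D S"
      have "g <#\<^bsub>D\<^esub> S = (crep C \<otimes>\<^bsub>D\<^esub> rot 2) <#\<^bsub>D\<^esub> S \<longleftrightarrow> C = (g \<otimes>\<^bsub>D\<^esub> rot (-2)) <#\<^bsub>D\<^esub> S"
        using S_shift[OF assms(3) D.crep_carrier[OF subgroup_S C]] D.crep_coset[OF subgroup_S C] by simp
      then show "x2 C * ((if g <#\<^bsub>D\<^esub> S = crep C <#\<^bsub>D\<^esub> S then 1 else 0)
             + (if g <#\<^bsub>D\<^esub> S = (crep C \<otimes>\<^bsub>D\<^esub> rot 2) <#\<^bsub>D\<^esub> S then 1 else 0))
          = (if C = g <#\<^bsub>D\<^esub> S then x2 C else 0) + (if C = (g \<otimes>\<^bsub>D\<^esub> rot (-2)) <#\<^bsub>D\<^esub> S then x2 C else 0)"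
        using D.crep_coset[OF subgroup_S C] by (auto simp: algebra_simps)
    qed simp
    also have "\<dots> = x2 (g <#\<^bsub>D\<^esub> S) + x2 ((g \<otimes>\<^bsub>D\<^esub> rot (-2)) <#\<^bsub>D\<^esub> S)"
      using C0 D.lcosI[OF g2, of S] finite_D D.finite_lcos
      by (simp add: sum.distrib sum.delta')
    finally show ?thesis .
  qed
  have p3: "fst (zsc2 x3 v3) (g <#\<^bsub>D\<^esub> S) = x3"
    using C0 by (simp add: zsc2_def v3_fst)
  show ?thesis using p1 p2 p3 by (simp add: Psi_def)
qed

lemma Psi_T: assumes "x1 \<in> pm D U" "x2 \<in> pm D S" "g \<in> carrier D"
  shows "snd (Psi (x1, x2, x3)) (g <#\<^bsub>D\<^esub> T) = - (x1 {g} + x1 {g \<otimes>\<^bsub>D\<^esub> rfl 0}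
     + x2 (g <#\<^bsub>D\<^esub> S) + x2 ((g \<otimes>\<^bsub>D\<^esub> rfl 0) <#\<^bsub>D\<^esub> S) + x3)"
proof -
  have C0: "g <#\<^bsub>D\<^esub> T \<in> lcos D T" using assms(3) by (rule D.lcosI)
  have p1: "snd (plift D U iact v1 x1) (g <#\<^bsub>D\<^esub> T) = - (x1 {g} + x1 {g \<otimes>\<^bsub>D\<^esub> rfl 0})"
  proof -
    have "snd (plift D U iact v1 x1) (g <#\<^bsub>D\<^esub> T)
        = - (\<Sum>C\<in>lcos D U. x1 C * (if g <#\<^bsub>D\<^esub> T = crep C <#\<^bsub>D\<^esub> T then 1 else 0))"
      by (auto simp: plift_def snd_sum fun_sum_apply zsc2_def iact_v1 D.crep_carrier[OF subgroup_U] cs_def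
          sum_negf[symmetric] intro!: sum.cong)
    also have "(\<Sum>C\<in>lcos D U. x1 C * (if g <#\<^bsub>D\<^esub> T = crep C <#\<^bsub>D\<^esub> T then 1 else 0))
        = (\<Sum>h\<in>g <#\<^bsub>D\<^esub> T. x1 {h})" by (rule sumU[OF subgroup_T C0])
    also have "\<dots> = x1 {g} + x1 {g \<otimes>\<^bsub>D\<^esub> rfl 0}"
      using assms(3) rfl0_neq by (simp add: lcoset_T)
    finally show ?thesis .
  qed
  have p2: "snd (plift D S iact v2 x2) (g <#\<^bsub>D\<^esub> T) = - (x2 (g <#\<^bsub>D\<^esub> S) + x2 ((g \<otimes>\<^bsub>D\<^esub> rfl 0) <#\<^bsub>D\<^esub> S))"
  proof -
    have "snd (plift D S iact v2 x2) (g <#\<^bsub>D\<^esub> T)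
        = - (\<Sum>C\<in>lcos D S. x2 C * ((if g <#\<^bsub>D\<^esub> T = crep C <#\<^bsub>D\<^esub> T then 1 else 0)
            + (if g <#\<^bsub>D\<^esub> T = (crep C \<otimes>\<^bsub>D\<^esub> rot (int m)) <#\<^bsub>D\<^esub> T then 1 else 0)))"
      by (auto simp: plift_def snd_sum fun_sum_apply zsc2_def iact_v2 D.crep_carrier[OF subgroup_S] cs_def
          sum_negf[symmetric] intro!: sum.cong)
    also have "(\<Sum>C\<in>lcos D S. x2 C * ((if g <#\<^bsub>D\<^esub> T = crep C <#\<^bsub>D\<^esub> T then 1 else 0)
            + (if g <#\<^bsub>D\<^esub> T = (crep C \<otimes>\<^bsub>D\<^esub> rot (int m)) <#\<^bsub>D\<^esub> T then 1 else 0)))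
        = (\<Sum>h\<in>g <#\<^bsub>D\<^esub> T. x2 (h <#\<^bsub>D\<^esub> S))" by (rule sumS[OF C0])
    also have "\<dots> = x2 (g <#\<^bsub>D\<^esub> S) + x2 ((g \<otimes>\<^bsub>D\<^esub> rfl 0) <#\<^bsub>D\<^esub> S)"
      using assms(3) rfl0_neq by (simp add: lcoset_T)
    finally show ?thesis .
  qed
  have p3: "snd (zsc2 x3 v3) (g <#\<^bsub>D\<^esub> T) = - x3"
    using C0 by (simp add: zsc2_def v3_snd)
  show ?thesis using p1 p2 p3 by (simp add: Psi_def)
qed

end

context dih
begin

lemma Psi_Pair: "Psi (x1, x2, x3) = plift D U iact v1 x1 + plift D S iact v2 x2 + zsc2 x3 v3"
  by (simp add: Psi_def)

lemma Psi_add: "Psi (x + y) = Psi x + Psi y"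
  by (cases x, cases y) (simp add: Psi_Pair plift_glift D.glift_add[OF modact_iact] zsc2_add2 algebra_simps)

lemma Psi_zero: "Psi 0 = 0"
  by (simp add: zero_prod_def Psi_Pair plift_glift D.glift_zero[OF modact_iact])

lemma Psi_uminus: "Psi (- x) = - Psi x"
  using Psi_add[of x "- x"] Psi_zero by (simp add: eq_neg_iff_add_eq_0 add.commute)

lemma Psi_diff: "Psi (x - y) = Psi x - Psi y"
  using Psi_add[of x "- y"] Psi_uminus[of y] by simp

lemma Psi_zsc3: "Psi (zsc3 a x) = zsc2 a (Psi x)"
  by (cases x) (simp add: zsc3_def Psi_Pair plift_glift D.glift_zsc[OF modact_iact] zsc2_add zsc2_zsc2 mult.commute)

lemma Psi_sum: "Psi (\<Sum>i\<in>A. f i) = (\<Sum>i\<in>A. Psi (f i))"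
proof (induction A rule: infinite_finite_induct)
  case (infinite A) then show ?case by (simp only: sum.infinite[OF infinite] Psi_zero)
next
  case empty then show ?case by (simp only: sum.empty Psi_zero)
next
  case (insert x F) then show ?case by (simp only: sum.insert[OF insert(1,2)] Psi_add)
qed

lemma R_add: "x \<in> R \<Longrightarrow> y \<in> R \<Longrightarrow> x + y \<in> R"
  by (auto simp: R_def D.pm_add)
lemma R_zero: "0 \<in> R" by (simp add: R_def zero_prod_def)
lemma R_uminus: "x \<in> R \<Longrightarrow> - x \<in> R"
  by (auto simp: R_def D.pm_uminus)
lemma R_diff: "x \<in> R \<Longrightarrow> y \<in> R \<Longrightarrow> x - y \<in> R"
  by (auto simp: R_def D.pm_diff)
lemma R_zsc3: "x \<in> R \<Longrightarrow> zsc3 a x \<in> R"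
  by (auto simp: R_def zsc3_def D.pm_zsc)
lemma R_sum: "(\<And>i. i \<in> A \<Longrightarrow> f i \<in> R) \<Longrightarrow> (\<Sum>i\<in>A. f i) \<in> R"
proof (induction A rule: infinite_finite_induct)
  case (infinite A) then show ?case using R_zero by simp
next
  case empty then show ?case using R_zero by simp
next
  case (insert x F) then show ?case using R_add by simp
qed
lemma R_ract: "x \<in> R \<Longrightarrow> ract g x \<in> R"
  by (auto simp: R_def ract_def D.pm_pact)

lemma Psi_equiv: assumes "x \<in> R" "g \<in> carrier D" shows "Psi (ract g x) = iact g (Psi x)"
proof -
  obtain x1 x2 x3 where x: "x = (x1, x2, x3)" "x1 \<in> pm D U" "x2 \<in> pm D S" using assms(1) by (auto simp: R_def)
  have "Psi (ract g x) = iact g (plift D U iact v1 x1) + iact g (plift D S iact v2 x2) + zsc2 x3 v3"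
    by (simp add: x Psi_Pair plift_glift D.glift_pact[OF modact_iact subgroup_U finite_D v1_fix assms(2) x(2)]
         D.glift_pact[OF modact_iact subgroup_S finite_D v2_fix assms(2) x(3)])
  also have "\<dots> = iact g (Psi x)"
  proof -
    have a: "iact g (u + w) = iact g u + iact g w" "iact g (zsc2 a u) = zsc2 a (iact g u)" for u w a
      using modact_iact assms(2) unfolding modact_def by blast+
    show ?thesis by (simp only: x Psi_Pair a iact_v3[OF assms(2)])
  qed
  finally show ?thesis .
qed

definition augI where "augI y = aug D S (fst y) + aug D T (snd y)"

lemma augI_add: "augI (x + y) = augI x + augI y"
  by (simp add: augI_def D.aug_add)
lemma augI_zsc2: "augI (zsc2 a y) = a * augI y"
  by (simp add: augI_def zsc2_def D.aug_zsc algebra_simps)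
lemma augI_sum: "augI (\<Sum>i\<in>A. f i) = (\<Sum>i\<in>A. augI (f i))"
  by (simp add: augI_def fst_sum snd_sum D.aug_sum sum.distrib)
lemma augI_iact: "g \<in> carrier D \<Longrightarrow> augI (iact g y) = augI y"
  by (cases y) (simp add: augI_def D.aug_pact[OF subgroup_S finite_D] D.aug_pact[OF subgroup_T finite_D])

lemma augI_v1: "augI v1 = 0"
  by (simp add: augI_def v1_def D.aug_uminus D.aug_cs[OF finite_D])
lemma augI_v2: "augI v2 = 0"
  by (simp add: augI_def v2_def D.aug_uminus D.aug_add D.aug_diff D.aug_cs[OF finite_D] one_rot)
lemma augI_v3: "augI v3 = 0"
  by (simp add: augI_def v3_def D.aug_uminus D.aug_add D.aug_sum D.aug_cs[OF finite_D] dtau_rfl)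

lemma augI_plift: assumes "augI v = 0" "\<forall>k\<in>K. iact k v = v" "subgroup K D"
  shows "augI (plift D K iact v x) = 0"
  using assms by (simp add: plift_def augI_sum augI_zsc2 augI_iact D.crep_carrier)

lemma Psi_aug: "augI (Psi x) = 0"
  by (cases x) (simp add: Psi_Pair augI_add augI_zsc2 augI_v3 augI_plift[OF augI_v1 v1_fix subgroup_U]
      augI_plift[OF augI_v2 v2_fix subgroup_S])

lemma pm_pair_plift: assumes "subgroup K D"
  shows "fst (plift D K iact v x) \<in> pm D S" "snd (plift D K iact v x) \<in> pm D T"
  unfolding plift_def fst_sum snd_sum
  by (auto intro!: D.pm_sum D.pm_zsc D.pm_pact simp: zsc2_def iact_def split: prod.splits)

lemma v3_pm: "fst v3 \<in> pm D S" "snd v3 \<in> pm D T"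
  by (auto simp: v3_fst v3_snd pm_def)

lemma Psi_pm: "fst (Psi x) \<in> pm D S" "snd (Psi x) \<in> pm D T"
  by (cases x, simp add: Psi_Pair zsc2_def, intro D.pm_add pm_pair_plift subgroup_U subgroup_S D.pm_zsc v3_pm)+

lemma Psi_I: "Psi x \<in> I"
  using Psi_pm[of x] Psi_aug[of x] by (cases "Psi x") (auto simp: I_def augI_def)

end

context dih
begin

lemma tele: "(x::'a::ab_group_add) - y + (y - z) = x - z" by simp
lemma pair0_add: "((0::'a::monoid_add), a) + (0, b) = (0, a + b)" by simp

abbreviation L where "L \<equiv> Psi ` R"

lemma L_add: assumes "a \<in> L" "b \<in> L" shows "a + b \<in> L"
proof -
  obtain x y where xy: "x \<in> R" "y \<in> R" "a = Psi x" "b = Psi y" using assms by blast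
  then have "a + b = Psi (x + y)" by (simp add: Psi_add)
  then show ?thesis using R_add[OF xy(1,2)] by blast
qed
lemma L_uminus: assumes "a \<in> L" shows "- a \<in> L"
proof -
  obtain x where xy: "x \<in> R" "a = Psi x" using assms by blast
  then have "- a = Psi (- x)" by (simp add: Psi_uminus)
  then show ?thesis using R_uminus[OF xy(1)] by blast
qed
lemma L_diff: assumes "a \<in> L" "b \<in> L" shows "a - b \<in> L"
  using L_add[OF assms(1) L_uminus[OF assms(2)]] by simp
lemma L_zsc2: assumes "a \<in> L" shows "zsc2 c a \<in> L"
proof -
  obtain x where xy: "x \<in> R" "a = Psi x" using assms by blast
  then have "zsc2 c a = Psi (zsc3 c x)" by (simp add: Psi_zsc3)
  then show ?thesis using R_zsc3[OF xy(1)] by blast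
qed
lemma L_zero: "0 \<in> L"
  using Psi_zero R_zero by force
lemma L_zero': "(0, 0) \<in> L"
  using L_zero by (simp only: zero_prod_def)
lemma L_sum: "(\<And>i. i \<in> A \<Longrightarrow> f i \<in> L) \<Longrightarrow> (\<Sum>i\<in>A. f i) \<in> L"
proof (induction A rule: infinite_finite_induct)
  case (infinite A) then show ?case using L_zero by simp
next
  case empty then show ?case using L_zero by simp
next
  case (insert x F) then show ?case using L_add by simp
qed

lemma gen1: assumes "g \<in> carrier D" shows "(cs D S g, - cs D T g) \<in> L"
proof -
  have "Psi (cs D U g, 0, 0) = (cs D S g, - cs D T g)"
    by (simp add: Psi_Pair plift_glift D.glift_zero[OF modact_iact]
        D.glift_cs[OF modact_iact subgroup_U finite_D v1_fix assms] iact_v1[OF assms])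
  moreover have "(cs D U g, 0, 0) \<in> R" using assms by (simp add: R_def D.pm_cs)
  ultimately show ?thesis by force
qed

lemma gen2: assumes "g \<in> carrier D" shows "iact g v2 \<in> L"
proof -
  have "Psi (0, cs D S g, 0) = iact g v2"
    by (simp add: Psi_Pair plift_glift D.glift_zero[OF modact_iact]
        D.glift_cs[OF modact_iact subgroup_S finite_D v2_fix assms])
  moreover have "(0, cs D S g, 0) \<in> R" using assms by (simp add: R_def D.pm_cs)
  ultimately show ?thesis by force
qed

lemma csS_m: assumes "g \<in> carrier D" shows "cs D S (g \<otimes>\<^bsub>D\<^esub> rot (int m)) = cs D S g"
proof -
  have "g \<otimes>\<^bsub>D\<^esub> rot (int m) \<in> g <#\<^bsub>D\<^esub> S" using assms by (simp add: lcoset_S)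
  then have "(g \<otimes>\<^bsub>D\<^esub> rot (int m)) <#\<^bsub>D\<^esub> S = g <#\<^bsub>D\<^esub> S"
    using D.lcos_eq_mem[OF subgroup_S D.lcosI[OF assms]] by blast
  then show ?thesis by (simp add: cs_def)
qed

lemma stepA: assumes "g \<in> carrier D"
  shows "(0, cs D T g - cs D T (g \<otimes>\<^bsub>D\<^esub> rot (int m))) \<in> L"
proof -
  have "(cs D S g, - cs D T g) - (cs D S (g \<otimes>\<^bsub>D\<^esub> rot (int m)), - cs D T (g \<otimes>\<^bsub>D\<^esub> rot (int m))) \<in> L"
    using assms by (intro L_diff gen1) auto
  then have "- (0, cs D T g - cs D T (g \<otimes>\<^bsub>D\<^esub> rot (int m))) \<in> L"
    by (simp add: csS_m[OF assms])
  from L_uminus[OF this] show ?thesis by simp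
qed

lemma stepB: assumes "g \<in> carrier D"
  shows "(0, cs D T (g \<otimes>\<^bsub>D\<^esub> rot 2) - cs D T g) \<in> L"
proof -
  have g2: "g \<otimes>\<^bsub>D\<^esub> rot 2 \<in> carrier D" using assms by simp
  have "iact g v2 - (cs D S g, - cs D T g) - (cs D S (g \<otimes>\<^bsub>D\<^esub> rot 2), - cs D T (g \<otimes>\<^bsub>D\<^esub> rot 2)) \<in> L"
    using assms by (intro L_diff gen1 gen2 g2)
  then have b: "(0, cs D T (g \<otimes>\<^bsub>D\<^esub> rot 2) - cs D T (g \<otimes>\<^bsub>D\<^esub> rot (int m))) \<in> L"
    by (simp add: iact_v2[OF assms])
  from L_diff[OF b stepA[OF assms]] show ?thesis by simp
qed

lemma stepC: assumes "g \<in> carrier D"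
  shows "(0, cs D T (g \<otimes>\<^bsub>D\<^esub> rot (2 * int l)) - cs D T g) \<in> L"
proof (induction l)
  case 0
  have e: "(0, cs D T (g \<otimes>\<^bsub>D\<^esub> rot (2 * int 0)) - cs D T g) = (0, 0)" using assms by simp
  show ?case unfolding e by (rule L_zero')
next
  case (Suc l)
  have gl: "g \<otimes>\<^bsub>D\<^esub> rot (2 * int l) \<in> carrier D" using assms by simp
  have e: "g \<otimes>\<^bsub>D\<^esub> rot (2 * int l) \<otimes>\<^bsub>D\<^esub> rot 2 = g \<otimes>\<^bsub>D\<^esub> rot (2 * int (Suc l))"
    using assms by (simp add: D.m_assoc algebra_simps)
  have eq: "((0::(int \<times> bool) set \<Rightarrow> int), cs D T (g \<otimes>\<^bsub>D\<^esub> rot (2 * int l) \<otimes>\<^bsub>D\<^esub> rot 2) - cs D T (g \<otimes>\<^bsub>D\<^esub> rot (2 * int l)))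
     + (0, cs D T (g \<otimes>\<^bsub>D\<^esub> rot (2 * int l)) - cs D T g) = (0, cs D T (g \<otimes>\<^bsub>D\<^esub> rot (2 * int (Suc l))) - cs D T g)"
    by (simp only: add_Pair add.left_neutral tele e)
  have "(0, cs D T (g \<otimes>\<^bsub>D\<^esub> rot (2 * int l) \<otimes>\<^bsub>D\<^esub> rot 2) - cs D T (g \<otimes>\<^bsub>D\<^esub> rot (2 * int l)))
     + (0, cs D T (g \<otimes>\<^bsub>D\<^esub> rot (2 * int l)) - cs D T g) \<in> L"
    by (rule L_add[OF stepB[OF gl] Suc])
  then show ?case unfolding eq .
qed

lemma stepD: assumes "g \<in> carrier D"
  shows "(0, cs D T (g \<otimes>\<^bsub>D\<^esub> rot 1) - cs D T g) \<in> L"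
proof -
  define k where "k = m div 2 + 1"
  have "int (2 * (m div 2) + 1) = int m"
    using odd_two_times_div_two_succ[OF odd_m] by simp
  then have k: "2 * int k = int m + 1" unfolding k_def by simp
  have g1: "g \<otimes>\<^bsub>D\<^esub> rot 1 \<in> carrier D" using assms by simp
  have e: "g \<otimes>\<^bsub>D\<^esub> rot 1 \<otimes>\<^bsub>D\<^esub> rot (int m) = g \<otimes>\<^bsub>D\<^esub> rot (2 * int k)"
    using assms k by (simp add: D.m_assoc add.commute)
  have "(0, cs D T (g \<otimes>\<^bsub>D\<^esub> rot 1) - cs D T (g \<otimes>\<^bsub>D\<^esub> rot 1 \<otimes>\<^bsub>D\<^esub> rot (int m))) \<in> L"
    by (rule stepA[OF g1])
  from L_add[OF this stepC[OF assms, of k]] show ?thesis by (simp add: e)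
qed

lemma stepE: "(0, cs D T (rot (int i)) - cs D T (rot 0)) \<in> L"
proof (induction i)
  case 0
  have e: "(0, cs D T (rot (int 0)) - cs D T (rot 0)) = (0, 0)" by simp
  show ?case unfolding e by (rule L_zero')
next
  case (Suc i)
  have e: "rot (int i) \<otimes>\<^bsub>D\<^esub> rot 1 = rot (int (Suc i))" by (simp add: add.commute)
  have eq: "((0::(int \<times> bool) set \<Rightarrow> int), cs D T (rot (int i) \<otimes>\<^bsub>D\<^esub> rot 1) - cs D T (rot (int i))) + (0, cs D T (rot (int i)) - cs D T (rot 0))
     = (0, cs D T (rot (int (Suc i))) - cs D T (rot 0))"
    by (simp only: add_Pair add.left_neutral tele e)
  have "(0, cs D T (rot (int i) \<otimes>\<^bsub>D\<^esub> rot 1) - cs D T (rot (int i))) + (0, cs D T (rot (int i)) - cs D T (rot 0)) \<in> L"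
    by (rule L_add[OF stepD[of "rot (int i)"] Suc]) simp
  then show ?case unfolding eq .
qed

lemma stepF: assumes "h \<in> carrier D" shows "(0, cs D T h - cs D T (rot 0)) \<in> L"
  using assms
proof (elim carrier_cases)
  fix j assume "h = rot j" "0 \<le> j"
  then show ?thesis using stepE[of "nat j"] by simp
next
  fix j assume "h = rfl j" "0 \<le> j"
  moreover have "cs D T (rfl j) = cs D T (rot j)" by (simp add: cs_def rflT_eq)
  ultimately show ?thesis using stepE[of "nat j"] by simp
qed

lemma I_sub_L: assumes y: "y \<in> I" shows "y \<in> L"
proof -
  obtain a b where ab: "y = (a, b)" "a \<in> pm D S" "b \<in> pm D T" "aug D S a + aug D T b = 0"
    using y by (auto simp: I_def)
  define z where "z = (\<Sum>C\<in>lcos D S. zsc2 (a C) (cs D S (crep C), - cs D T (crep C)))"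
  have zL: "z \<in> L" unfolding z_def
    by (intro L_sum L_zsc2 gen1 D.crep_carrier[OF subgroup_S])
  define c where "c = (\<Sum>C\<in>lcos D S. zsc (a C) (cs D T (crep C)))"
  have z: "z = (a, - c)"
    unfolding z_def c_def
    by (simp add: zsc2_Pair sum_prod zsc_minus sum_negf D.pm_decomp[OF subgroup_S finite_D ab(2), symmetric])
  define b' where "b' = b + c"
  have c_pm: "c \<in> pm D T" unfolding c_def
    by (intro D.pm_sum D.pm_zsc D.pm_cs D.crep_carrier[OF subgroup_S])
  have b'_pm: "b' \<in> pm D T" unfolding b'_def using ab(3) c_pm by (rule D.pm_add)
  have aug_c: "aug D T c = aug D S a"
  proof -
    have "aug D T c = (\<Sum>C\<in>lcos D S. a C)"
      by (simp add: c_def D.aug_sum D.aug_zsc D.aug_cs[OF finite_D] D.crep_carrier[OF subgroup_S])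
    then show ?thesis by (simp add: aug_def)
  qed
  have aug_b': "aug D T b' = 0" using ab(4) aug_c by (simp add: b'_def D.aug_add)
  have b'_dec: "b' = (\<Sum>C\<in>lcos D T. zsc (b' C) (cs D T (crep C) - cs D T (rot 0)))"
  proof -
    have "(\<Sum>C\<in>lcos D T. zsc (b' C) (cs D T (crep C) - cs D T (rot 0)))
        = (\<Sum>C\<in>lcos D T. zsc (b' C) (cs D T (crep C))) - zsc (\<Sum>C\<in>lcos D T. b' C) (cs D T (rot 0))"
      by (simp add: zsc_diff sum_subtractf zsc_sum2)
    also have "(\<Sum>C\<in>lcos D T. b' C) = 0" using aug_b' by (simp add: aug_def)
    also have "(\<Sum>C\<in>lcos D T. zsc (b' C) (cs D T (crep C))) - zsc 0 (cs D T (rot 0))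
        = (\<Sum>C\<in>lcos D T. zsc (b' C) (cs D T (crep C)))" by (simp only: zsc_zero diff_zero)
    also have "\<dots> = b'" using D.pm_decomp[OF subgroup_T finite_D b'_pm] by (rule sym)
    finally show ?thesis by (rule sym)
  qed
  have b'L: "(0, b') \<in> L"
  proof -
    have "(\<Sum>C\<in>lcos D T. zsc2 (b' C) (0, cs D T (crep C) - cs D T (rot 0))) \<in> L"
      by (intro L_sum L_zsc2 stepF D.crep_carrier[OF subgroup_T])
    moreover have "(\<Sum>C\<in>lcos D T. zsc2 (b' C) ((0::(int \<times> bool) set \<Rightarrow> int), cs D T (crep C) - cs D T (rot 0))) = (0, b')"
      by (subst (2) b'_dec) (simp add: zsc2_Pair sum_prod)
    ultimately show ?thesis by simp
  qed
  have "y = z + (0, b')" using ab z by (simp add: b'_def)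
  then show ?thesis using L_add[OF zL b'L] by simp
qed

theorem Psi_surj: "Psi ` R = I"
  using I_sub_L Psi_I by blast

end

context dih
begin

definition kk :: nat where "kk = m div 2 + 1"

lemma kk2: "2 * int kk = int m + 1"
proof -
  have "int (2 * (m div 2) + 1) = int m"
    using odd_two_times_div_two_succ[OF odd_m] by simp
  then show ?thesis unfolding kk_def by simp
qed

lemma kk2n: "2 * kk = m + 1" using kk2 by linarith

definition ind :: "bool \<Rightarrow> int" where "ind P = (if P then 1 else 0)"

lemma ind_simps[simp]: "ind True = 1" "ind False = 0" by (simp_all add: ind_def)

definition x1e1 where "x1e1 = - (cs D U (rot 0) + cs D U (rfl (int m)))"
definition x2e1 where "x2e1 = (\<Sum>l<kk. cs D S (rot (4 * int l)) + cs D S (rfl (4 * int l + 2)))"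
definition e1 where "e1 = (x1e1, x2e1, -1::int)"

definition x1e2 where "x1e2 = (\<lambda>C. if C \<in> lcos D U \<and> snd (crep C) then -1 else (0::int))"
definition x2e2 where "x2e2 = (\<lambda>C. if C \<in> lcos D S then (if snd (crep C) then int kk else int kk - 1) else (0::int))"
definition e2 where "e2 = (x1e2, x2e2, 2 - 2 * int kk)"

lemma snd_mult: assumes "g \<in> carrier D" "h \<in> carrier D"
  shows "snd (g \<otimes>\<^bsub>D\<^esub> h) = (snd g \<noteq> snd h)"
  using assms by (elim carrier_cases) auto

lemma snd_inv: "g \<in> carrier D \<Longrightarrow> snd (inv\<^bsub>D\<^esub> g) = snd g"
  by (elim carrier_cases) auto

lemma snd_crep_S: assumes "g \<in> carrier D" shows "snd (crep (g <#\<^bsub>D\<^esub> S)) = snd g"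
proof -
  have "crep (g <#\<^bsub>D\<^esub> S) \<in> {g, g \<otimes>\<^bsub>D\<^esub> rot (int m)}"
    using D.crep_mem[OF subgroup_S D.lcosI[OF assms]] lcoset_S[OF assms] by simp
  moreover have "snd (g \<otimes>\<^bsub>D\<^esub> rot (int m)) = snd g" using snd_mult[OF assms rot_carrier] by simp
  ultimately show ?thesis by auto
qed

lemma x1e2_pm: "x1e2 \<in> pm D U" by (simp add: pm_def x1e2_def)
lemma x2e2_pm: "x2e2 \<in> pm D S" by (simp add: pm_def x2e2_def)
lemma x1e1_pm: "x1e1 \<in> pm D U" by (simp add: x1e1_def D.pm_uminus D.pm_add D.pm_diff D.pm_cs)
lemma x2e1_pm: "x2e1 \<in> pm D S" by (simp add: x2e1_def D.pm_sum D.pm_add D.pm_cs)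
lemma e1_R: "e1 \<in> R" by (simp add: R_def e1_def x1e1_pm x2e1_pm)
lemma e2_R: "e2 \<in> R" by (simp add: R_def e2_def x1e2_pm x2e2_pm)

lemma x1e2_at: "h \<in> carrier D \<Longrightarrow> x1e2 {h} = - ind (snd h)"
  by (simp add: x1e2_def lcos_U ind_def)
lemma x2e2_at: "g \<in> carrier D \<Longrightarrow> x2e2 (g <#\<^bsub>D\<^esub> S) = (if snd g then int kk else int kk - 1)"
  by (simp add: x2e2_def D.lcosI snd_crep_S)

lemma x1e1_at: "h \<in> carrier D \<Longrightarrow> x1e1 {h} = - (ind (h = rot 0) + ind (h = rfl (int m)))"
  by (simp add: x1e1_def cs_def lcoset_U ind_def)

lemma x2e1_at: "g <#\<^bsub>D\<^esub> S \<in> lcos D S \<Longrightarrow> x2e1 (g <#\<^bsub>D\<^esub> S) =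
    (\<Sum>l<kk. ind (g <#\<^bsub>D\<^esub> S = rot (4 * int l) <#\<^bsub>D\<^esub> S) + ind (g <#\<^bsub>D\<^esub> S = rfl (4 * int l + 2) <#\<^bsub>D\<^esub> S))"
  by (simp add: x2e1_def fun_sum_apply cs_def ind_def)

lemma sum_pairs: fixes k :: nat and f :: "nat \<Rightarrow> int"
  shows "(\<Sum>l<k. f (2 * l) + f (2 * l + 1)) = (\<Sum>i<2 * k. f i)"
  by (induction k) (simp_all add: algebra_simps)

lemma count_2i: "(\<Sum>i<m + 1. ind (int m dvd (j - 2 * int i))) = 1 + ind (int m dvd j)"
proof -
  have c: "int m dvd (j - 2 * int i) \<longleftrightarrow> int m dvd (int kk * j - int i)" for i
  proof
    assume "int m dvd (j - 2 * int i)"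
    then have "int m dvd int kk * (j - 2 * int i)" by simp
    moreover have "int kk * (j - 2 * int i) = (int kk * j - int i) - int m * int i"
    proof -
      have "int kk * (j - 2 * int i) = int kk * j - (2 * int kk) * int i" by (simp add: algebra_simps)
      also have "\<dots> = int kk * j - (int m + 1) * int i" using kk2 by simp
      finally show ?thesis by (simp add: algebra_simps)
    qed
    ultimately show "int m dvd (int kk * j - int i)" by (metis dvd_add_left_iff dvd_triv_left diff_add_cancel)
  next
    assume "int m dvd (int kk * j - int i)"
    then have "int m dvd 2 * (int kk * j - int i)" by (rule dvd_mult)
    moreover have "2 * (int kk * j - int i) = (j - 2 * int i) + int m * j"
    proof -
      have "2 * (int kk * j - int i) = (2 * int kk) * j - 2 * int i" by (simp add: algebra_simps)
      also have "\<dots> = (int m + 1) * j - 2 * int i" using kk2 by simp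
      finally show ?thesis by (simp add: algebra_simps)
    qed
    ultimately show "int m dvd (j - 2 * int i)" by (metis dvd_add_left_iff dvd_triv_left)
  qed
  have "(\<Sum>i<m + 1. ind (int m dvd (j - 2 * int i))) = (\<Sum>i<m. ind (int m dvd (j - 2 * int i))) + ind (int m dvd (j - 2 * int m))"
    by simp
  also have "(\<Sum>i<m. ind (int m dvd (j - 2 * int i))) = (\<Sum>i<m. if int m dvd (int kk * j - int i) then 1 else 0)"
    by (simp add: c ind_def)
  also have "\<dots> = 1" by (rule count_mod_m)
  also have "int m dvd (j - 2 * int m) \<longleftrightarrow> int m dvd j"
    by (metis dvd_diff_commute dvd_triv_left mult.commute dvd_diff dvd_add_right_iff diff_add_cancel)
  finally show ?thesis by simp
qed

lemma count_e1: "(\<Sum>l<kk. ind (int m dvd (j - 4 * int l)) + ind (int m dvd (j - (4 * int l + 2))))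
   = 1 + ind (int m dvd j)"
proof -
  have "(\<Sum>l<kk. ind (int m dvd (j - 4 * int l)) + ind (int m dvd (j - (4 * int l + 2))))
      = (\<Sum>l<kk. (\<lambda>i. ind (int m dvd (j - 2 * int i))) (2 * l) + (\<lambda>i. ind (int m dvd (j - 2 * int i))) (2 * l + 1))"
    by (simp add: algebra_simps)
  also have "\<dots> = (\<Sum>i<2 * kk. ind (int m dvd (j - 2 * int i)))" by (rule sum_pairs)
  also have "\<dots> = 1 + ind (int m dvd j)" using count_2i[of j] by (simp add: kk2n)
  finally show ?thesis .
qed


lemma ind_or: "\<not> (A \<and> B) \<Longrightarrow> ind A + ind B = ind (A \<or> B)"
  by (auto simp: ind_def)

lemma rot_eq_dvd: "rot a = rot b \<longleftrightarrow> n dvd (a - b)"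
  by (simp add: rot_eq_iff mod_eq_dvd_iff)
lemma rfl_eq_dvd: "rfl a = rfl b \<longleftrightarrow> n dvd (a - b)"
  by (simp add: rfl_eq_iff mod_eq_dvd_iff)

lemma n_dvd_shift: "n dvd (x + int m) \<longleftrightarrow> n dvd (x - int m)"
proof -
  have "x + int m = (x - int m) + 1 * n" by simp
  then show ?thesis by (simp only: dvd_add_times_triv_right_iff)
qed

lemma A_ind: "ind (n dvd x) + ind (n dvd (x - int m)) = ind (int m dvd x)"
proof -
  have excl: "\<not> (n dvd x \<and> n dvd (x - int m))"
  proof
    assume "n dvd x \<and> n dvd (x - int m)"
    then have "n dvd (x - (x - int m))" using dvd_diff by blast
    then have "n dvd int m" by simp
    then show False using m_pos by (auto dest: zdvd_imp_le)
  qed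
  have "(n dvd x \<or> n dvd (x - int m)) \<longleftrightarrow> int m dvd x"
  proof
    assume "n dvd x \<or> n dvd (x - int m)"
    moreover have "int m dvd n" by simp
    ultimately have "int m dvd x \<or> int m dvd (x - int m)" using dvd_trans by blast
    then show "int m dvd x" by (metis diff_add_cancel dvd_add dvd_refl)
  next
    assume "int m dvd x"
    then obtain t where t: "x = int m * t" by (auto simp: dvd_def)
    show "n dvd x \<or> n dvd (x - int m)"
    proof (cases "even t")
      case True
      then obtain s where "t = 2 * s" by auto
      then have "x = n * s" using t by simp
      then show ?thesis by simp
    next
      case False
      then obtain s where "t = 2 * s + 1" using oddE by blast
      then have "x - int m = n * s" using t by (simp add: algebra_simps)
      then show ?thesis by simp
    qed
  qed
  then show ?thesis using ind_or[OF excl] by simp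
qed

lemma H1: "ind (rot j = rot 0) + ind (rot (j + int m) = rot 0) = ind (int m dvd j)"
  using A_ind[of j] n_dvd_shift[of j] by (simp add: rot_eq_dvd)
lemma H2: "ind (rfl j = rfl (int m)) + ind (rfl (j - int m) = rfl (int m)) = ind (int m dvd j)"
proof -
  have "n dvd (j - int m - int m) \<longleftrightarrow> n dvd j"
  proof -
    have "j - int m - int m = j + (-1) * n" by simp
    then show ?thesis by (simp only: dvd_add_times_triv_right_iff)
  qed
  then show ?thesis using A_ind[of j] by (simp add: rfl_eq_dvd add.commute)
qed
lemma H3: "ind (rot j = rot 0) + ind (rfl j = rfl (int m)) = ind (int m dvd j)"
  using A_ind[of j] by (simp add: rot_eq_dvd rfl_eq_dvd)

lemma Psi_zeroI: assumes "x \<in> R"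
  "\<And>g. g \<in> carrier D \<Longrightarrow> fst (Psi x) (g <#\<^bsub>D\<^esub> S) = 0"
  "\<And>g. g \<in> carrier D \<Longrightarrow> snd (Psi x) (g <#\<^bsub>D\<^esub> T) = 0"
  shows "Psi x = 0"
proof -
  have "fst (Psi x) = 0"
  proof
    fix C show "fst (Psi x) C = 0 C"
      using assms(2) Psi_pm(1)[of x] by (cases "C \<in> lcos D S") (auto elim: D.lcosE simp: pm_def)
  qed
  moreover have "snd (Psi x) = 0"
  proof
    fix C show "snd (Psi x) C = 0 C"
      using assms(3) Psi_pm(2)[of x] by (cases "C \<in> lcos D T") (auto elim: D.lcosE simp: pm_def)
  qed
  ultimately show ?thesis by (simp add: prod_eq_iff)
qed

lemma x2e1_rot: "x2e1 (rot j <#\<^bsub>D\<^esub> S) = (\<Sum>l<kk. ind (int m dvd (j - 4 * int l)))"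
  by (simp add: x2e1_at D.lcosI rotS_eq)
lemma x2e1_rfl: "x2e1 (rfl j <#\<^bsub>D\<^esub> S) = (\<Sum>l<kk. ind (int m dvd (j - (4 * int l + 2))))"
  by (simp add: x2e1_at D.lcosI rflS_eq)

lemma Psi_e1: "Psi e1 = 0"
proof (rule Psi_zeroI[OF e1_R])
  fix g assume g: "g \<in> carrier D"
  have eq: "fst (Psi e1) (g <#\<^bsub>D\<^esub> S) = x1e1 {g} + x1e1 {g \<otimes>\<^bsub>D\<^esub> rot (int m)}
     + (x2e1 (g <#\<^bsub>D\<^esub> S) + x2e1 ((g \<otimes>\<^bsub>D\<^esub> rot (-2)) <#\<^bsub>D\<^esub> S)) - 1"
    unfolding e1_def Psi_S[OF x1e1_pm x2e1_pm g] by simp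
  show "fst (Psi e1) (g <#\<^bsub>D\<^esub> S) = 0"
    using g
  proof (elim carrier_cases)
    fix j assume gj: "g = rot j"
    have a: "x1e1 {g} + x1e1 {g \<otimes>\<^bsub>D\<^esub> rot (int m)} = - ind (int m dvd j)"
      using H1[of j] by (simp add: gj x1e1_at)
    have b: "x2e1 (g <#\<^bsub>D\<^esub> S) + x2e1 ((g \<otimes>\<^bsub>D\<^esub> rot (- 2)) <#\<^bsub>D\<^esub> S) = 1 + ind (int m dvd j)"
      using count_e1[of j] by (simp add: gj x2e1_rot sum.distrib[symmetric] algebra_simps)
    show ?thesis unfolding eq using a b by simp
  next
    fix j assume gj: "g = rfl j"
    have a: "x1e1 {g} + x1e1 {g \<otimes>\<^bsub>D\<^esub> rot (int m)} = - ind (int m dvd j)"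
      using H2[of j] by (simp add: gj x1e1_at)
    have b: "x2e1 (g <#\<^bsub>D\<^esub> S) + x2e1 ((g \<otimes>\<^bsub>D\<^esub> rot (- 2)) <#\<^bsub>D\<^esub> S) = 1 + ind (int m dvd j)"
      using count_e1[of j] by (simp add: gj x2e1_rfl sum.distrib[symmetric] algebra_simps)
    show ?thesis unfolding eq using a b by simp
  qed
next
  fix g assume g: "g \<in> carrier D"
  have eq: "snd (Psi e1) (g <#\<^bsub>D\<^esub> T) = - (x1e1 {g} + x1e1 {g \<otimes>\<^bsub>D\<^esub> rfl 0}
     + (x2e1 (g <#\<^bsub>D\<^esub> S) + x2e1 ((g \<otimes>\<^bsub>D\<^esub> rfl 0) <#\<^bsub>D\<^esub> S)) - 1)"
    unfolding e1_def Psi_T[OF x1e1_pm x2e1_pm g] by simp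
  show "snd (Psi e1) (g <#\<^bsub>D\<^esub> T) = 0"
    using g
  proof (elim carrier_cases)
    fix j assume gj: "g = rot j"
    have a: "x1e1 {g} + x1e1 {g \<otimes>\<^bsub>D\<^esub> rfl 0} = - ind (int m dvd j)"
      using H3[of j] by (simp add: gj x1e1_at)
    have b: "x2e1 (g <#\<^bsub>D\<^esub> S) + x2e1 ((g \<otimes>\<^bsub>D\<^esub> rfl 0) <#\<^bsub>D\<^esub> S) = 1 + ind (int m dvd j)"
      using count_e1[of j] by (simp add: gj x2e1_rot x2e1_rfl sum.distrib[symmetric] algebra_simps)
    show ?thesis unfolding eq using a b by simp
  next
    fix j assume gj: "g = rfl j"
    have a: "x1e1 {g} + x1e1 {g \<otimes>\<^bsub>D\<^esub> rfl 0} = - ind (int m dvd j)"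
      using H3[of j] by (simp add: gj x1e1_at algebra_simps)
    have b: "x2e1 (g <#\<^bsub>D\<^esub> S) + x2e1 ((g \<otimes>\<^bsub>D\<^esub> rfl 0) <#\<^bsub>D\<^esub> S) = 1 + ind (int m dvd j)"
      using count_e1[of j] by (simp add: gj x2e1_rot x2e1_rfl sum.distrib[symmetric] algebra_simps)
    show ?thesis unfolding eq using a b by simp
  qed
qed

lemma Psi_e2: "Psi e2 = 0"
proof (rule Psi_zeroI[OF e2_R])
  fix g assume g: "g \<in> carrier D"
  have s1: "snd (g \<otimes>\<^bsub>D\<^esub> rot a) = snd g" for a using snd_mult[OF g rot_carrier] by simp
  show "fst (Psi e2) (g <#\<^bsub>D\<^esub> S) = 0"
    unfolding e2_def Psi_S[OF x1e2_pm x2e2_pm g] using g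
    by (simp add: x1e2_at x2e2_at s1 ind_def)
next
  fix g assume g: "g \<in> carrier D"
  have s2: "snd (g \<otimes>\<^bsub>D\<^esub> rfl 0) = (\<not> snd g)" using snd_mult[OF g rfl_carrier] by simp
  show "snd (Psi e2) (g <#\<^bsub>D\<^esub> T) = 0"
    unfolding e2_def Psi_T[OF x1e2_pm x2e2_pm g] using g
    by (simp add: x1e2_at x2e2_at s2 ind_def)
qed


lemma K1_cases: "k \<in> K1 \<Longrightarrow> k = rot 0 \<or> k = rfl (int m)" by (simp add: K1_def)

lemma csS_rot_eq: "int m dvd (a - b) \<Longrightarrow> cs D S (rot a) = cs D S (rot b)"
  unfolding cs_def using rotS_eq[of a b] by simp
lemma csS_rfl_eq: "int m dvd (a - b) \<Longrightarrow> cs D S (rfl a) = cs D S (rfl b)"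
  unfolding cs_def using rflS_eq[of a b] by simp

lemma ract_one: "x \<in> R \<Longrightarrow> ract (rot 0) x = x"
  using D.pact_one[OF subgroup_U] D.pact_one[OF subgroup_S]
  by (auto simp: R_def one_rot[symmetric])

lemma e1_fix: "\<forall>k\<in>K1. ract k e1 = e1"
proof
  fix k assume "k \<in> K1"
  then consider "k = rot 0" | "k = rfl (int m)" using K1_cases by blast
  then show "ract k e1 = e1"
  proof cases
    case 1 then show ?thesis using ract_one e1_R by simp
  next
    case 2
    have a: "pact D U (rfl (int m)) x1e1 = x1e1"
      by (simp add: x1e1_def D.pact_uminus D.pact_add D.pact_diff D.pact_cs[OF subgroup_U] add.commute)
    have b: "pact D S (rfl (int m)) x2e1 = x2e1"
    proof -
      let ?F = "\<lambda>l::nat. cs D S (rot (4 * int l)) + cs D S (rfl (4 * int l + 2))"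
      have "pact D S (rfl (int m)) x2e1 = (\<Sum>l<kk. cs D S (rfl (int m - 4 * int l)) + cs D S (rot (int m - (4 * int l + 2))))"
        by (simp add: x2e1_def D.pact_sum D.pact_add D.pact_cs[OF subgroup_S])
      also have "\<dots> = (\<Sum>l<kk. ?F (kk - Suc l))"
      proof (rule sum.cong)
        fix l assume l: "l \<in> {..<kk}"
        then have il: "int (kk - Suc l) = int kk - 1 - int l" by auto
        have "cs D S (rfl (int m - 4 * int l)) = cs D S (rfl (4 * int (kk - Suc l) + 2))"
        proof (rule csS_rfl_eq)
          have "int m - 4 * int l - (4 * int (kk - Suc l) + 2) = int m - 2 * (2 * int kk) + 2"
            by (simp add: il algebra_simps)
          also have "\<dots> = int m * (-1)" using kk2 by simp
          finally have eq: "int m - 4 * int l - (4 * int (kk - Suc l) + 2) = int m * (-1)" .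
          show "int m dvd (int m - 4 * int l - (4 * int (kk - Suc l) + 2))" unfolding eq by (rule dvd_triv_left)
        qed
        moreover have "cs D S (rot (int m - (4 * int l + 2))) = cs D S (rot (4 * int (kk - Suc l)))"
        proof (rule csS_rot_eq)
          have "int m - (4 * int l + 2) - 4 * int (kk - Suc l) = int m - 2 * (2 * int kk) + 2"
            by (simp add: il algebra_simps)
          also have "\<dots> = int m * (-1)" using kk2 by simp
          finally have eq: "int m - (4 * int l + 2) - 4 * int (kk - Suc l) = int m * (-1)" .
          show "int m dvd (int m - (4 * int l + 2) - 4 * int (kk - Suc l))" unfolding eq by (rule dvd_triv_left)
        qed
        ultimately show "cs D S (rfl (int m - 4 * int l)) + cs D S (rot (int m - (4 * int l + 2))) = ?F (kk - Suc l)"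
          by (simp add: add.commute)
      qed simp
      also have "\<dots> = (\<Sum>l<kk. ?F l)" by (rule sum.nat_diff_reindex)
      finally show ?thesis by (simp add: x2e1_def)
    qed
    show ?thesis using 2 a b by (simp add: e1_def)
  qed
qed

lemma lcos_single: "g \<in> carrier D \<Longrightarrow> g <#\<^bsub>D\<^esub> {h} = {g \<otimes>\<^bsub>D\<^esub> h}"
  by (simp add: l_coset_def)

lemma e2_fix: "\<forall>k\<in>K2. ract k e2 = e2"
proof
  fix k assume "k \<in> K2"
  then obtain i where k: "k = rot i" by (auto simp: K2_def)
  have a: "pact D U (rot i) x1e2 = x1e2"
  proof
    fix C show "pact D U (rot i) x1e2 C = x1e2 C"
    proof (cases "C \<in> lcos D U")
      case True
      then obtain h where h: "h \<in> carrier D" "C = {h}" by (auto simp: lcos_U)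
      have "snd (rot (- i) \<otimes>\<^bsub>D\<^esub> h) = snd h" using snd_mult[OF rot_carrier h(1)] by simp
      moreover have "{h} \<in> lcos D U" using h by (simp add: lcos_U)
      ultimately show ?thesis using h by (simp add: pact_def lcos_single x1e2_at)
    qed (simp add: pact_def x1e2_def)
  qed
  have b: "pact D S (rot i) x2e2 = x2e2"
  proof
    fix C show "pact D S (rot i) x2e2 C = x2e2 C"
    proof (cases "C \<in> lcos D S")
      case True
      then obtain g where g: "g \<in> carrier D" "C = g <#\<^bsub>D\<^esub> S" by (rule D.lcosE)
      have "snd (rot (- i) \<otimes>\<^bsub>D\<^esub> g) = snd g" using snd_mult[OF rot_carrier g(1)] by simp
      then show ?thesis using g
        by (simp add: pact_def D.lcos_lmult[OF subgroup_S] x2e2_at D.lcosI)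
    qed (simp add: pact_def x2e2_def)
  qed
  show "ract k e2 = e2" using a b k by (simp add: e2_def)
qed

definition Pm where "Pm = pm D K1 \<times> pm D K2"
definition Pact where "Pact g p = (pact D K1 g (fst p), pact D K2 g (snd p))"
definition phi where "phi p = glift zsc3 D K1 ract e1 (fst p) + glift zsc3 D K2 ract e2 (snd p)"

lemma phi_add: "phi (p + q) = phi p + phi q"
  by (simp add: phi_def D.glift_add[OF modact_ract] algebra_simps)
lemma phi_diff: "phi (p - q) = phi p - phi q"
  by (simp add: phi_def D.glift_diff[OF modact_ract] algebra_simps)

lemma phi_equiv: assumes "p \<in> Pm" "g \<in> carrier D" shows "phi (Pact g p) = ract g (phi p)"
proof -
  have p: "fst p \<in> pm D K1" "snd p \<in> pm D K2" using assms(1) by (auto simp: Pm_def mem_Times_iff)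
  have "phi (Pact g p) = ract g (glift zsc3 D K1 ract e1 (fst p)) + ract g (glift zsc3 D K2 ract e2 (snd p))"
    using p by (simp add: phi_def Pact_def
        D.glift_pact[OF modact_ract subgroup_K1 finite_D e1_fix assms(2)]
        D.glift_pact[OF modact_ract subgroup_K2 finite_D e2_fix assms(2)])
  also have "\<dots> = ract g (phi p)"
  proof -
    have a: "ract g (u + w) = ract g u + ract g w" for u w
      using modact_ract assms(2) unfolding modact_def by blast
    show ?thesis by (simp only: phi_def a)
  qed
  finally show ?thesis .
qed

lemma glift_R: "e \<in> R \<Longrightarrow> glift zsc3 D K ract e x \<in> R"
  by (simp add: glift_def R_sum R_zsc3 R_ract)

lemma phi_R: "phi p \<in> R"
  by (simp add: phi_def R_add glift_R e1_R e2_R)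

lemma iact_zero: "g \<in> carrier D \<Longrightarrow> iact g 0 = 0"
  by (rule D.modact_act0[OF modact_iact])

lemma Psi_glift: assumes "e \<in> R" "Psi e = 0" "subgroup K D"
  shows "Psi (glift zsc3 D K ract e x) = 0"
proof -
  have "Psi (glift zsc3 D K ract e x) = (\<Sum>C\<in>lcos D K. zsc2 (x C) (Psi (ract (crep C) e)))"
    by (simp add: glift_def Psi_sum Psi_zsc3)
  also have "\<dots> = (\<Sum>C\<in>lcos D K. zsc2 (x C) 0)"
    using assms by (intro sum.cong) (simp_all add: Psi_equiv D.crep_carrier iact_zero)
  finally show ?thesis by simp
qed

lemma phi_E: "phi p \<in> E"
  using phi_R Psi_glift[OF e1_R Psi_e1 subgroup_K1] Psi_glift[OF e2_R Psi_e2 subgroup_K2]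
  by (simp add: E_def phi_def Psi_add)

end

context dih
begin

definition Rot where "Rot = rot 0 <#\<^bsub>D\<^esub> K2"
definition Ref where "Ref = rfl 0 <#\<^bsub>D\<^esub> K2"

lemma K2_coset: "h \<in> carrier D \<Longrightarrow> h <#\<^bsub>D\<^esub> K2 = (if snd h then Ref else Rot)"
  by (auto simp: Rot_def Ref_def lcoset_K2)

lemma Rot_neq_Ref: "Rot \<noteq> Ref"
proof -
  have "rot 0 \<in> Rot" "rot 0 \<notin> Ref" by (auto simp: Rot_def Ref_def lcoset_K2)
  then show ?thesis by auto
qed

lemma lcos_K2: "lcos D K2 = {Rot, Ref}"
proof -
  have "lcos D K2 = (\<lambda>g. g <#\<^bsub>D\<^esub> K2) ` carrier D" by (auto simp: lcos_def)
  also have "\<dots> = {Rot, Ref}"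
  proof
    show "(\<lambda>g. g <#\<^bsub>D\<^esub> K2) ` carrier D \<subseteq> {Rot, Ref}" by (auto simp: K2_coset)
    show "{Rot, Ref} \<subseteq> (\<lambda>g. g <#\<^bsub>D\<^esub> K2) ` carrier D"
      using K2_coset[of "rot 0"] K2_coset[of "rfl 0"] by force
  qed
  finally show ?thesis .
qed

lemma snd_crep_K2: "snd (crep Rot) = False" "snd (crep Ref) = True"
proof -
  have "crep Rot \<in> Rot" "crep Ref \<in> Ref"
    using D.crep_mem[OF subgroup_K2] lcos_K2 by auto
  then show "snd (crep Rot) = False" "snd (crep Ref) = True"
    by (auto simp: Rot_def Ref_def lcoset_K2)
qed

definition rotpart where "rotpart C = (if snd (crep C) then crep C \<otimes>\<^bsub>D\<^esub> rfl (int m) else crep C)"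

lemma rotpart: assumes "C \<in> lcos D K1"
  shows "rotpart C \<in> C" "\<not> snd (rotpart C)" "rotpart C \<in> carrier D"
proof -
  have c: "crep C \<in> carrier D" "crep C <#\<^bsub>D\<^esub> K1 = C"
    using D.crep_carrier[OF subgroup_K1 assms] D.crep_coset[OF subgroup_K1 assms] by auto
  then have "rotpart C \<in> crep C <#\<^bsub>D\<^esub> K1" by (auto simp: rotpart_def lcoset_K1)
  then show "rotpart C \<in> C" using c by simp
  show "\<not> snd (rotpart C)" using snd_mult[OF c(1) rfl_carrier] by (simp add: rotpart_def)
  show "rotpart C \<in> carrier D" using c by (simp add: rotpart_def)
qed

lemma rotpart_rot: assumes "h \<in> carrier D" "\<not> snd h" shows "rotpart (h <#\<^bsub>D\<^esub> K1) = h"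
proof -
  have C: "h <#\<^bsub>D\<^esub> K1 \<in> lcos D K1" using assms(1) by (rule D.lcosI)
  have "rotpart (h <#\<^bsub>D\<^esub> K1) \<in> {h, h \<otimes>\<^bsub>D\<^esub> rfl (int m)}" using rotpart(1)[OF C] lcoset_K1[OF assms(1)] by simp
  moreover have "snd (h \<otimes>\<^bsub>D\<^esub> rfl (int m))" using snd_mult[OF assms(1) rfl_carrier] assms(2) by simp
  ultimately show ?thesis using rotpart(2)[OF C] by auto
qed

lemma rfl_m_K1: "rfl (int m) <#\<^bsub>D\<^esub> K1 = rot 0 <#\<^bsub>D\<^esub> K1"
  by (auto simp: lcoset_K1)

lemma inv_mult_eq: assumes "g \<in> carrier D" "h \<in> carrier D" "c \<in> carrier D"
  shows "inv\<^bsub>D\<^esub> g \<otimes>\<^bsub>D\<^esub> h = c \<longleftrightarrow> h = g \<otimes>\<^bsub>D\<^esub> c"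
  using assms by (metis D.inv_solve_left)

lemma x1_glift1: assumes h: "h \<in> carrier D"
  shows "fst (glift zsc3 D K1 ract e1 p1) {h} = - p1 (h <#\<^bsub>D\<^esub> K1)"
proof -
  have "fst (glift zsc3 D K1 ract e1 p1) {h} = (\<Sum>C\<in>lcos D K1. p1 C * x1e1 {inv\<^bsub>D\<^esub> (crep C) \<otimes>\<^bsub>D\<^esub> h})"
    by (auto simp: glift_def fst_sum fun_sum_apply zsc3_def e1_def pact_def lcos_U h lcos_single
        D.crep_carrier[OF subgroup_K1] intro!: sum.cong)
  also have "\<dots> = (\<Sum>C\<in>lcos D K1. if C = h <#\<^bsub>D\<^esub> K1 then - p1 C else 0)"
  proof (rule sum.cong)
    fix C assume C: "C \<in> lcos D K1"
    have c: "crep C \<in> carrier D" "crep C <#\<^bsub>D\<^esub> K1 = C"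
      using D.crep_carrier[OF subgroup_K1 C] D.crep_coset[OF subgroup_K1 C] by auto
    have neq: "crep C \<noteq> crep C \<otimes>\<^bsub>D\<^esub> rfl (int m)"
    proof
      assume "crep C = crep C \<otimes>\<^bsub>D\<^esub> rfl (int m)"
      then have "snd (crep C) = snd (crep C \<otimes>\<^bsub>D\<^esub> rfl (int m))" by simp
      then show False using snd_mult[OF c(1) rfl_carrier] by simp
    qed
    have "x1e1 {inv\<^bsub>D\<^esub> (crep C) \<otimes>\<^bsub>D\<^esub> h} = - (ind (h = crep C) + ind (h = crep C \<otimes>\<^bsub>D\<^esub> rfl (int m)))"
      using c(1) h by (simp add: x1e1_at inv_mult_eq one_rot[symmetric] D.r_one)
    also have "\<dots> = - ind (h \<in> C)"
      using neq c by (auto simp: ind_def lcoset_K1)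
    also have "(h \<in> C) = (C = h <#\<^bsub>D\<^esub> K1)" using D.lcos_mem_iff[OF subgroup_K1 C h] by auto
    finally show "p1 C * x1e1 {inv\<^bsub>D\<^esub> (crep C) \<otimes>\<^bsub>D\<^esub> h} = (if C = h <#\<^bsub>D\<^esub> K1 then - p1 C else 0)"
      by (simp add: ind_def)
  qed simp
  also have "\<dots> = - p1 (h <#\<^bsub>D\<^esub> K1)"
    using D.lcosI[OF h, of K1] D.finite_lcos[OF finite_D] by (simp add: sum.delta')
  finally show ?thesis .
qed

lemma x1_glift2: assumes h: "h \<in> carrier D"
  shows "fst (glift zsc3 D K2 ract e2 p2) {h} = - p2 (if snd h then Rot else Ref)"
proof -
  have "fst (glift zsc3 D K2 ract e2 p2) {h} = (\<Sum>C\<in>lcos D K2. p2 C * x1e2 {inv\<^bsub>D\<^esub> (crep C) \<otimes>\<^bsub>D\<^esub> h})"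
    by (auto simp: glift_def fst_sum fun_sum_apply zsc3_def e2_def pact_def lcos_U h lcos_single
        D.crep_carrier[OF subgroup_K2] intro!: sum.cong)
  also have "\<dots> = (\<Sum>C\<in>{Rot, Ref}. - p2 C * ind (snd (crep C) \<noteq> snd h))"
    unfolding lcos_K2[symmetric]
  proof (rule sum.cong)
    fix C assume C: "C \<in> lcos D K2"
    have c: "crep C \<in> carrier D" using D.crep_carrier[OF subgroup_K2 C] .
    show "p2 C * x1e2 {inv\<^bsub>D\<^esub> (crep C) \<otimes>\<^bsub>D\<^esub> h} = - p2 C * ind (snd (crep C) \<noteq> snd h)"
      using c h by (simp add: x1e2_at snd_mult snd_inv)
  qed simp
  also have "\<dots> = - p2 (if snd h then Rot else Ref)"
    using Rot_neq_Ref by (simp add: snd_crep_K2)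
  finally show ?thesis .
qed

lemma x1_phi: "h \<in> carrier D \<Longrightarrow> fst (phi p) {h} = - fst p (h <#\<^bsub>D\<^esub> K1) - snd p (if snd h then Rot else Ref)"
  by (simp add: phi_def x1_glift1 x1_glift2)

lemma aug_x2e1: "aug D S x2e1 = 2 * int kk"
  by (simp add: x2e1_def D.aug_sum D.aug_add D.aug_cs[OF finite_D])

lemma card_S: "card S = 2"
  using rot_m_neq[of "rot 0"] by (simp add: S_eq)

lemma sum_carrier: "(\<Sum>g\<in>carrier D. F g) = (\<Sum>a\<in>{0..<n}. F (rot a) + F (rfl a))"
proof -
  have "(\<Sum>g\<in>carrier D. F g) = (\<Sum>a\<in>{0..<n}. \<Sum>b\<in>UNIV. F (a, b))"
    by (simp add: carrier_D sum.cartesian_product)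
  also have "\<dots> = (\<Sum>a\<in>{0..<n}. F (rot a) + F (rfl a))"
    by (intro sum.cong) (auto simp: UNIV_bool rot_def rfl_def add.commute)
  finally show ?thesis .
qed

lemma aug_x2e2: "aug D S x2e2 = int m * (2 * int kk - 1)"
proof -
  have "(\<Sum>g\<in>carrier D. x2e2 (g <#\<^bsub>D\<^esub> S)) = of_nat (card S) * aug D S x2e2"
    unfolding aug_def by (rule D.sum_carrier_lcos2[OF subgroup_S finite_D])
  moreover have "(\<Sum>g\<in>carrier D. x2e2 (g <#\<^bsub>D\<^esub> S)) = n * (2 * int kk - 1)"
    by (simp add: sum_carrier x2e2_at)
  ultimately show ?thesis using card_S by simp
qed

definition dd where "dd x = fst x {rot 0} - fst x {rfl (int m)}"
definition ss where "ss x = aug D S (fst (snd x)) + (int m + 1) * snd (snd x)"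
definition mu where "mu x = (ss x - dd x) div 2"
definition lam where "lam x = mu x + dd x"
definition psi where "psi x = ((\<lambda>C. if C \<in> lcos D K1 then - fst x {rotpart C} - mu x else 0),
   (\<lambda>C. if C = Rot then lam x else if C = Ref then mu x else 0))"

lemma ss_phi: "ss (phi p) = snd p Rot + snd p Ref"
proof -
  have a1: "aug D S (fst (snd (glift zsc3 D K1 ract e1 p1))) = 2 * int kk * (\<Sum>C\<in>lcos D K1. p1 C)" for p1
    by (simp add: glift_def fst_sum snd_sum zsc3_def e1_def D.aug_sum D.aug_zsc
        D.aug_pact[OF subgroup_S finite_D] D.crep_carrier[OF subgroup_K1] aug_x2e1 sum_distrib_left algebra_simps)
  have a2: "aug D S (fst (snd (glift zsc3 D K2 ract e2 p2))) = int m * (2 * int kk - 1) * (p2 Rot + p2 Ref)" for p2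
    using Rot_neq_Ref
    by (simp add: glift_def fst_sum snd_sum zsc3_def e2_def D.aug_sum D.aug_add D.aug_zsc lcos_K2
        D.aug_pact[OF subgroup_S finite_D] D.crep_carrier[OF subgroup_K2] aug_x2e2 algebra_simps)
  have b1: "snd (snd (glift zsc3 D K1 ract e1 p1)) = - (\<Sum>C\<in>lcos D K1. p1 C)" for p1
    by (simp add: glift_def snd_sum zsc3_def e1_def sum_negf)
  have b2: "snd (snd (glift zsc3 D K2 ract e2 p2)) = (2 - 2 * int kk) * (p2 Rot + p2 Ref)" for p2
    using Rot_neq_Ref by (simp add: glift_def snd_sum zsc3_def e2_def lcos_K2 algebra_simps)
  show ?thesis
    using kk2 by (simp add: ss_def phi_def D.aug_add a1 a2 b1 b2 algebra_simps)
qed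


lemma dd_phi: "dd (phi p) = snd p Rot - snd p Ref"
proof -
  have "rfl (int m) <#\<^bsub>D\<^esub> K1 = rot 0 <#\<^bsub>D\<^esub> K1" by (rule rfl_m_K1)
  then show ?thesis by (simp add: dd_def x1_phi)
qed

lemma mu_phi: "mu (phi p) = snd p Ref"
proof -
  have "ss (phi p) - dd (phi p) = 2 * snd p Ref" by (simp add: ss_phi dd_phi)
  then show ?thesis by (simp add: mu_def)
qed

lemma lam_phi: "lam (phi p) = snd p Rot"
  by (simp add: lam_def mu_phi dd_phi)

lemma psi_Pm: "psi x \<in> Pm"
  using lcos_K2 by (auto simp: psi_def Pm_def pm_def)

lemma psi_phi: assumes "p \<in> Pm" shows "psi (phi p) = p"
proof -
  obtain p1 p2 where p: "p = (p1, p2)" "p1 \<in> pm D K1" "p2 \<in> pm D K2" using assms by (auto simp: Pm_def)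
  have a: "fst (psi (phi (p1, p2))) = p1"
  proof
    fix C show "fst (psi (phi (p1, p2))) C = p1 C"
    proof (cases "C \<in> lcos D K1")
      case True
      have "rotpart C <#\<^bsub>D\<^esub> K1 = C" using D.lcos_eq_mem[OF subgroup_K1 True rotpart(1)[OF True]] .
      then show ?thesis using True rotpart(2,3)[OF True] by (simp add: psi_def x1_phi mu_phi)
    next
      case False then show ?thesis using p(2) by (simp add: psi_def pm_def)
    qed
  qed
  have b: "snd (psi (phi (p1, p2))) = p2"
  proof
    fix C show "snd (psi (phi (p1, p2))) C = p2 C"
      using p(3) Rot_neq_Ref lcos_K2 by (auto simp: psi_def lam_phi mu_phi pm_def)
  qed
  show ?thesis using a b unfolding p(1) by (simp add: prod_eq_iff)
qed

lemma E_ES: assumes "(x1, x2, x3) \<in> E" "g \<in> carrier D"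
  shows "x1 {g} + x1 {g \<otimes>\<^bsub>D\<^esub> rot (int m)} + x2 (g <#\<^bsub>D\<^esub> S) + x2 ((g \<otimes>\<^bsub>D\<^esub> rot (-2)) <#\<^bsub>D\<^esub> S) + x3 = 0"
proof -
  have "x1 \<in> pm D U" "x2 \<in> pm D S" "Psi (x1, x2, x3) = 0" using assms(1) by (auto simp: E_def R_def)
  then show ?thesis using Psi_S[of x1 x2 g x3] assms(2) by simp
qed

lemma E_ET: assumes "(x1, x2, x3) \<in> E" "g \<in> carrier D"
  shows "x1 {g} + x1 {g \<otimes>\<^bsub>D\<^esub> rfl 0} + x2 (g <#\<^bsub>D\<^esub> S) + x2 ((g \<otimes>\<^bsub>D\<^esub> rfl 0) <#\<^bsub>D\<^esub> S) + x3 = 0"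
proof -
  have "x1 \<in> pm D U" "x2 \<in> pm D S" "Psi (x1, x2, x3) = 0" using assms(1) by (auto simp: E_def R_def)
  then show ?thesis using Psi_T[of x1 x2 g x3] assms(2) by simp
qed

lemma alt_sign: fixes h :: "int \<Rightarrow> int" assumes "\<And>a. h a = - h (a - 2)" shows "h a = (-1) ^ l * h (a - 2 * int l)"
proof (induction l arbitrary: a)
  case 0 then show ?case by simp
next
  case (Suc l)
  have "h a = (-1) ^ l * h (a - 2 * int l)" by (rule Suc)
  also have "h (a - 2 * int l) = - h (a - 2 * int (Suc l))" using assms[of "a - 2 * int l"] by (simp add: algebra_simps)
  finally show ?case by simp
qed

lemma ker0:
  assumes xE: "(x1, x2, x3) \<in> E"
    and r0: "\<And>a. x1 {rot a} = 0"
    and r1: "x1 {rfl (int m)} = 0"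
    and s01: "ss (x1, x2, x3) = 0 \<or> ss (x1, x2, x3) = 1"
  shows "(x1, x2, x3) = 0"
proof -
  have x1pm: "x1 \<in> pm D U" and x2pm: "x2 \<in> pm D S" using xE by (auto simp: E_def R_def)
  define P where "P a = x2 (rot a <#\<^bsub>D\<^esub> S)" for a
  define Q where "Q a = x2 (rfl a <#\<^bsub>D\<^esub> S)" for a
  have Pm: "P (a - int m) = P a" for a
  proof -
    have "rot (a - int m) <#\<^bsub>D\<^esub> S = rot a <#\<^bsub>D\<^esub> S" by (simp add: rotS_eq)
    then show ?thesis unfolding P_def by simp
  qed
  have Qm: "Q (a - int m) = Q a" for a
  proof -
    have "rfl (a - int m) <#\<^bsub>D\<^esub> S = rfl a <#\<^bsub>D\<^esub> S" by (simp add: rflS_eq)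
    then show ?thesis unfolding Q_def by simp
  qed
  have Qm': "Q (a + int m) = Q a" for a
  proof -
    have "rfl (a + int m) <#\<^bsub>D\<^esub> S = rfl a <#\<^bsub>D\<^esub> S" by (simp add: rflS_eq)
    then show ?thesis unfolding Q_def by simp
  qed
  have ES_rot: "P a + P (a - 2) + x3 = 0" for a
    using E_ES[OF xE rot_carrier[of a]] r0 by (simp add: P_def algebra_simps)
  have step1: "2 * P a + x3 = 0" for a
  proof -
    define h where "h a = 2 * P a + x3" for a
    have "h a = - h (a - 2)" for a using ES_rot[of a] by (simp add: h_def algebra_simps)
    then have "h a = (-1) ^ m * h (a - 2 * int m)" by (rule alt_sign)
    moreover have "h (a - 2 * int m) = h a"
    proof -
      have "rot (a - 2 * int m) = rot a" using rot_sub_n[of a] by simp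
      then show ?thesis by (simp add: h_def P_def)
    qed
    moreover have "(-1::int) ^ m = -1" using odd_m by simp
    ultimately have "h a = - h a" by simp
    then show ?thesis by (simp add: h_def)
  qed
  have x1rfl: "x1 {rfl b} = - P b - Q b - x3" for b
    using E_ET[OF xE rot_carrier[of b]] r0 by (simp add: P_def Q_def algebra_simps)
  have Qstep: "Q (a + 2) = Q a" for a
  proof -
    have "x1 {rfl a} + x1 {rfl (a - int m)} + Q a + Q (a + 2) + x3 = 0"
      using E_ES[OF xE rfl_carrier[of a]] by (simp add: Q_def algebra_simps)
    moreover have "x1 {rfl a} + x1 {rfl (a - int m)} = - 2 * Q a - x3"
      using x1rfl[of a] x1rfl[of "a - int m"] Pm[of a] Qm[of a] step1[of a] by simp
    ultimately show ?thesis by simp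
  qed
  have Q2l: "Q (a + 2 * int l) = Q a" for a l
    by (induction l) (simp_all add: Qstep[of "a + 2 * int _", simplified algebra_simps] algebra_simps)
  have Q1: "Q (a + 1) = Q a" for a
  proof -
    have "Q (a + 1) = Q (a + 1 + int m)" using Qm' by simp
    also have "a + 1 + int m = a + 2 * int kk" using kk2 by simp
    also have "Q (a + 2 * int kk) = Q a" by (rule Q2l)
    finally show ?thesis .
  qed
  have Qc: "Q (int l) = Q 0" for l
  proof (induction l)
    case 0 then show ?case by simp
  next
    case (Suc l)
    have "Q (int (Suc l)) = Q (int l + 1)" by (simp add: add.commute)
    also have "\<dots> = Q (int l)" by (rule Q1)
    finally show ?case using Suc.IH by simp
  qed
  define q where "q = Q 0"
  have Qq: "0 \<le> a \<Longrightarrow> Q a = q" for a using Qc[of "nat a"] by (simp add: q_def)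
  have x3q: "x3 = - 2 * q"
    using x1rfl[of "int m"] r1 step1[of "int m"] Qq[of "int m"] by simp
  have aug2: "aug D S x2 = - int m * x3"
  proof -
    have "(\<Sum>g\<in>carrier D. x2 (g <#\<^bsub>D\<^esub> S)) = of_nat (card S) * aug D S x2"
      unfolding aug_def by (rule D.sum_carrier_lcos2[OF subgroup_S finite_D])
    moreover have "2 * (\<Sum>g\<in>carrier D. x2 (g <#\<^bsub>D\<^esub> S)) = (\<Sum>a\<in>{0..<n}. 2 * P a + 2 * Q a)"
      by (simp add: sum_carrier P_def Q_def sum_distrib_left algebra_simps)
    moreover have "(\<Sum>a\<in>{0..<n}. 2 * P a + 2 * Q a) = (\<Sum>a\<in>{0..<n}. - 2 * x3)"
      using step1 Qq x3q by (intro sum.cong) (auto simp: algebra_simps)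
    ultimately have "4 * aug D S x2 = - 4 * int m * x3" using card_S by simp
    then show ?thesis by simp
  qed
  have "ss (x1, x2, x3) = x3" by (simp add: ss_def aug2 algebra_simps)
  then have "x3 = 0" using s01 x3q by presburger
  then have q0: "q = 0" using x3q by simp
  have P0: "P a = 0" for a using step1[of a] \<open>x3 = 0\<close> by simp
  have Q0: "0 \<le> a \<Longrightarrow> Q a = 0" for a using Qq q0 by simp
  have x1z: "x1 = 0"
  proof
    fix C show "x1 C = 0 C"
    proof (cases "C \<in> lcos D U")
      case True
      then obtain h where h: "h \<in> carrier D" "C = {h}" by (auto simp: lcos_U)
      show ?thesis using h(1)
      proof (elim carrier_cases)
        fix j assume "h = rot j" then show ?thesis using h r0 by simp
      next
        fix j assume "h = rfl j" "0 \<le> j" then show ?thesis using h x1rfl[of j] P0 Q0 \<open>x3 = 0\<close> by simp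
      qed
    next
      case False then show ?thesis using x1pm by (simp add: pm_def)
    qed
  qed
  have x2z: "x2 = 0"
  proof
    fix C show "x2 C = 0 C"
    proof (cases "C \<in> lcos D S")
      case True
      then obtain g where g: "g \<in> carrier D" "C = g <#\<^bsub>D\<^esub> S" by (rule D.lcosE)
      show ?thesis using g(1)
      proof (elim carrier_cases)
        fix j assume "g = rot j" then show ?thesis using g P0[of j] by (simp add: P_def)
      next
        fix j assume "g = rfl j" "0 \<le> j" then show ?thesis using g Q0[of j] by (simp add: Q_def)
      qed
    next
      case False then show ?thesis using x2pm by (simp add: pm_def)
    qed
  qed
  show ?thesis using x1z x2z \<open>x3 = 0\<close> by (simp add: zero_prod_def)
qed


lemma ss_diff: "ss (x - y) = ss x - ss y"
  by (simp add: ss_def D.aug_diff algebra_simps)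

lemma E_diff: "x \<in> E \<Longrightarrow> y \<in> E \<Longrightarrow> x - y \<in> E"
  by (auto simp: E_def R_diff Psi_diff)

lemma span: assumes xE: "x \<in> E" shows "phi (psi x) = x"
proof -
  define p where "p = psi x"
  define y where "y = x - phi p"
  have yE: "y \<in> E" unfolding y_def using xE phi_E by (rule E_diff)
  obtain y1 y2 y3 where y: "y = (y1, y2, y3)" by (cases y) auto
  have xR: "x \<in> R" using xE by (simp add: E_def)
  have y1: "y1 = fst x - fst (phi p)"
  proof -
    have "fst y = y1" using y by simp
    moreover have "fst y = fst x - fst (phi p)" by (simp add: y_def)
    ultimately show ?thesis by simp
  qed
  have r0: "y1 {rot a} = 0" for a
  proof -
    have C: "rot a <#\<^bsub>D\<^esub> K1 \<in> lcos D K1" by (simp add: D.lcosI)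
    have "y1 {rot a} = fst x {rot a} - fst (phi p) {rot a}" by (simp add: y1)
    also have "\<dots> = 0"
      using C Rot_neq_Ref by (simp add: x1_phi p_def psi_def rotpart_rot)
    finally show ?thesis .
  qed
  have r1: "y1 {rfl (int m)} = 0"
  proof -
    have C: "rot 0 <#\<^bsub>D\<^esub> K1 \<in> lcos D K1" by (simp add: D.lcosI)
    have "y1 {rfl (int m)} = fst x {rfl (int m)} - fst (phi p) {rfl (int m)}" by (simp add: y1)
    also have "\<dots> = 0"
      using C by (simp add: x1_phi p_def psi_def rfl_m_K1 rotpart_rot lam_def dd_def)
    finally show ?thesis .
  qed
  have s01: "ss (y1, y2, y3) = 0 \<or> ss (y1, y2, y3) = 1"
  proof -
    have "ss y = ss x - (snd p Rot + snd p Ref)" by (simp add: y_def ss_diff ss_phi)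
    also have "snd p Rot + snd p Ref = lam x + mu x" using Rot_neq_Ref by (simp add: p_def psi_def)
    also have "ss x - (lam x + mu x) = (ss x - dd x) - (ss x - dd x) div 2 * 2"
      by (simp add: lam_def mu_def algebra_simps)
    also have "\<dots> = (ss x - dd x) mod 2" by (rule minus_div_mult_eq_mod)
    finally have "ss y = (ss x - dd x) mod 2" .
    moreover have "(ss x - dd x) mod 2 = 0 \<or> (ss x - dd x) mod 2 = 1" by presburger
    ultimately show ?thesis using y by simp
  qed
  have "y = 0" using ker0[OF yE[unfolded y] r0 r1 s01] y by simp
  then show ?thesis by (simp add: y_def p_def)
qed

lemma Pm_add: "p \<in> Pm \<Longrightarrow> q \<in> Pm \<Longrightarrow> p + q \<in> Pm"
  by (auto simp: Pm_def D.pm_add)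
lemma Pm_Pact: "Pact g p \<in> Pm"
  by (simp add: Pm_def Pact_def D.pm_pact)

theorem main_H1: assumes H: "subgroup H D" shows "H1_zero D H ract E"
  unfolding H1_zero_def
proof (intro allI impI)
  fix f assume fE: "\<forall>h\<in>H. f h \<in> E"
    and fcr: "\<forall>g\<in>H. \<forall>h\<in>H. f (g \<otimes>\<^bsub>D\<^esub> h) = f g + ract g (f h)"
  have Hc: "h \<in> H \<Longrightarrow> h \<in> carrier D" for h using subgroup.subset[OF H] by blast
  define pf where "pf h = psi (f h)" for h
  have pfP: "pf h \<in> Pm" for h by (simp add: pf_def psi_Pm)
  have sp: "h \<in> H \<Longrightarrow> phi (pf h) = f h" for h using span fE by (simp add: pf_def)
  have cr: "pf (g \<otimes>\<^bsub>D\<^esub> h) = pf g + Pact g (pf h)" if g: "g \<in> H" and h: "h \<in> H" for g h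
  proof -
    have "phi (pf g + Pact g (pf h)) = f (g \<otimes>\<^bsub>D\<^esub> h)"
      using g h fcr by (simp add: phi_add phi_equiv[OF pfP Hc] sp)
    then have "psi (phi (pf g + Pact g (pf h))) = pf (g \<otimes>\<^bsub>D\<^esub> h)" by (simp add: pf_def)
    then show ?thesis using psi_phi[OF Pm_add[OF pfP Pm_Pact]] by simp
  qed
  have pf1: "fst (pf h) \<in> pm D K1" "snd (pf h) \<in> pm D K2" for h
    using pfP[of h] by (auto simp: Pm_def mem_Times_iff)
  have cr1: "\<forall>g\<in>H. \<forall>h\<in>H. fst (pf (g \<otimes>\<^bsub>D\<^esub> h)) = fst (pf g) + pact D K1 g (fst (pf h))"
    using cr by (simp add: Pact_def)
  have cr2: "\<forall>g\<in>H. \<forall>h\<in>H. snd (pf (g \<otimes>\<^bsub>D\<^esub> h)) = snd (pf g) + pact D K2 g (snd (pf h))"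
    using cr by (simp add: Pact_def)
  have "\<exists>q\<in>pm D K1. \<forall>g\<in>H. fst (pf g) = pact D K1 g q - q"
    by (rule D.pm_H1[OF subgroup_K1 finite_D H _ cr1]) (simp add: pf1)
  then obtain q1 where q1: "q1 \<in> pm D K1" "\<forall>g\<in>H. fst (pf g) = pact D K1 g q1 - q1" by blast
  have "\<exists>q\<in>pm D K2. \<forall>g\<in>H. snd (pf g) = pact D K2 g q - q"
    by (rule D.pm_H1[OF subgroup_K2 finite_D H _ cr2]) (simp add: pf1)
  then obtain q2 where q2: "q2 \<in> pm D K2" "\<forall>g\<in>H. snd (pf g) = pact D K2 g q2 - q2" by blast
  define q where "q = (q1, q2)"
  have qP: "q \<in> Pm" using q1 q2 by (simp add: q_def Pm_def)
  have pfq: "pf g = Pact g q - q" if "g \<in> H" for g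
    using q1 q2 that by (simp add: prod_eq_iff Pact_def q_def)
  show "\<exists>e\<in>E. \<forall>g\<in>H. f g = ract g e - e"
  proof (intro bexI[of _ "phi q"] ballI)
    show "phi q \<in> E" by (rule phi_E)
    fix g assume g: "g \<in> H"
    have "f g = phi (pf g)" using sp[OF g] by simp
    also have "\<dots> = phi (Pact g q) - phi q" by (simp add: pfq[OF g] phi_diff)
    also have "\<dots> = ract g (phi q) - phi q" by (simp add: phi_equiv[OF qP Hc[OF g]])
    finally show "f g = ract g (phi q) - phi q" .
  qed
qed

theorem main: "Psi ` R = I \<and> (\<forall>H. subgroup H D \<longrightarrow> H1_zero D H ract E)"
  using Psi_surj main_H1 by blast

end

theorem proposition7p7:
  fixes m :: nat
  assumes "odd m" and "0 < m"
  defines "D \<equiv> dihedral (int (2 * m))"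
  defines "S \<equiv> {\<one>\<^bsub>D\<^esub>, dsigma [^]\<^bsub>D\<^esub> m}"
  defines "T \<equiv> {\<one>\<^bsub>D\<^esub>, dtau}"
  defines "U \<equiv> {\<one>\<^bsub>D\<^esub>}"
  defines "I \<equiv> {(y1, y2). y1 \<in> pm D S \<and> y2 \<in> pm D T \<and> aug D S y1 + aug D T y2 = 0}"
  defines "R \<equiv> pm D U \<times> pm D S \<times> (UNIV :: int set)"
  defines "iact \<equiv> \<lambda>g (y1, y2). (pact D S g y1, pact D T g y2)"
  defines "ract \<equiv> \<lambda>g (x1, x2, x3::int). (pact D U g x1, pact D S g x2, x3)"
  defines "v1 \<equiv> (cs D S \<one>\<^bsub>D\<^esub>, - cs D T \<one>\<^bsub>D\<^esub>)"
  defines "v2 \<equiv> (cs D S \<one>\<^bsub>D\<^esub> + cs D S (dsigma [^]\<^bsub>D\<^esub> (2::nat)),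
                - (cs D T \<one>\<^bsub>D\<^esub> + cs D T (dsigma [^]\<^bsub>D\<^esub> m)))"
  defines "v3 \<equiv> ((\<Sum>i<m. cs D S (dsigma [^]\<^bsub>D\<^esub> i) + cs D S (dsigma [^]\<^bsub>D\<^esub> i \<otimes>\<^bsub>D\<^esub> dtau)),
                - (\<Sum>i<2 * m. cs D T (dsigma [^]\<^bsub>D\<^esub> i)))"
  defines "\<Psi> \<equiv> \<lambda>(x1, x2, x3). plift D U iact v1 x1 + plift D S iact v2 x2 + zsc2 x3 v3"
  defines "E \<equiv> {x \<in> R. \<Psi> x = 0}"
  shows "\<Psi> ` R = I \<and> (\<forall>H. subgroup H D \<longrightarrow> H1_zero D H ract E)"
proof -
  have dm: "dih m" using \<open>odd m\<close> \<open>0 < m\<close> by (rule dih.intro)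
  have main: "dih.Psi m ` dih.R m = dih.I m \<and>
      (\<forall>H. subgroup H (dih.D m) \<longrightarrow> H1_zero (dih.D m) H (dih.ract m) (dih.E m))"
    by (rule dih.main[OF dm])
  note main' = main[unfolded dih.E_def[OF dm] dih.Psi_def[OF dm] dih.v3_def[OF dm] dih.v2_def[OF dm] dih.v1_def[OF dm] dih.ract_def[OF dm] dih.iact_def[OF dm] dih.R_def[OF dm] dih.I_def[OF dm] dih.U_def[OF dm] dih.T_def[OF dm] dih.S_def[OF dm] dih.D_def[OF dm]]
  show ?thesis
    unfolding E_def \<Psi>_def v3_def v2_def v1_def ract_def iact_def R_def I_def U_def T_def S_def D_def
    by (rule main')
qed


end
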